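(* For $w \in Y_b$ and $\theta \in C_0^\infty(\mathbb{R})$, $\big\|\theta(t)\int_0^t S(t-t')w(\cdot,t')\,dt'\big\|_{X_b} \leq C\|w\|_{Y_b}$, with $C$ independent of $w$.
   Context: $S(t)$ is the group $e^{-t\partial_x^3}$, $S(t)\phi(x) = \int e^{i(x\xi+t\xi^3)}\hat\phi(\xi)d\xi$. With the Fourier inversion $w(x,t)=\iint e^{i(x\xi+t\lambda)}\hat w(\xi,\lambda)d\xi d\lambda$ (constants immaterial), the Duhamel term is $\int_0^t S(t-t')w(\cdot,t')dt' = \iint e^{ix\xi}\frac{e^{it\lambda}-e^{it\xi^3}}{i(\lambda-\xi^3)}\hat w(\xi,\lambda)d\xi d\lambda$. Fix $\frac12 < \alpha < \frac23$ and $0<b<\frac12$. For $F\in\mathcal{S}'(\mathbb{R}^2)$ with space-time Fourier transform $\hat F$: $\|F\|_{X_b} = \big(\iint(1+|\lambda-\xi^3|)^{2b}|\hat F|^2d\xi d\lambda\big)^{1/2} + \big(\iint_{|\xi|<1}(1+|\lambda|)^{2\alpha}|\hat F|^2d\xi d\lambda\big)^{1/2}$; $\|F\|_{Y_b} = \big(\iint\frac{|\hat F|^2}{(1+|\lambda-\xi^3|)^{2b}}d\xi d\lambda\big)^{1/2} + \big(\iint_{|\xi|<1}\frac{|\hat F|^2}{(1+|\lambda|)^{2(1-\alpha)}}d\xi d\lambda\big)^{1/2} + \big(\int\big(\int\frac{|\hat F(\xi,\lambda)|}{1+|\lambda-\xi^3|}d\lambda\big)^2 d\xi\big)^{1/2}$.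 $X_b$, $Y_b$ are the spaces where these norms are finite. *)

theory Defs
  imports "HOL-Analysis.Analysis"
begin

definition smooth_fun :: "(real \<Rightarrow> real) \<Rightarrow> bool" where
  "smooth_fun f \<longleftrightarrow> (\<forall>n x. ((deriv ^^ n) f) differentiable (at x))"

definition C0_infty :: "(real \<Rightarrow> real) \<Rightarrow> bool" where
  "C0_infty f \<longleftrightarrow> smooth_fun f \<and> bounded {t. f t \<noteq> 0}"

definition enn_sqrt :: "ennreal \<Rightarrow> ennreal" where
  "enn_sqrt I = (if I = \<infinity> then \<infinity> else ennreal (sqrt (enn2real I)))"

text \<open>Norms, expressed through the space-time Fourier transform Fh (xi, lambda)
  (first argument xi, second argument lambda).\<close>
definition Xb_norm :: "real \<Rightarrow> real \<Rightarrow> (real \<Rightarrow> real \<Rightarrow> complex) \<Rightarrow> ennreal" where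
  "Xb_norm \<alpha> b Fh =
     enn_sqrt (\<integral>\<^sup>+ \<xi>. \<integral>\<^sup>+ lam. ennreal ((1 + \<bar>lam - \<xi>^3\<bar>) powr (2*b) * (cmod (Fh \<xi> lam))\<^sup>2) \<partial>lborel \<partial>lborel)
   + enn_sqrt (\<integral>\<^sup>+ \<xi>. indicator {-1<..<1} \<xi> *
        (\<integral>\<^sup>+ lam. ennreal ((1 + \<bar>lam\<bar>) powr (2*\<alpha>) * (cmod (Fh \<xi> lam))\<^sup>2) \<partial>lborel) \<partial>lborel)"

definition Yb_norm :: "real \<Rightarrow> real \<Rightarrow> (real \<Rightarrow> real \<Rightarrow> complex) \<Rightarrow> ennreal" where
  "Yb_norm \<alpha> b Fh =
     enn_sqrt (\<integral>\<^sup>+ \<xi>. \<integral>\<^sup>+ lam. ennreal ((cmod (Fh \<xi> lam))\<^sup>2 / (1 + \<bar>lam - \<xi>^3\<bar>) powr (2*b)) \<partial>lborel \<partial>lborel)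
   + enn_sqrt (\<integral>\<^sup>+ \<xi>. indicator {-1<..<1} \<xi> *
        (\<integral>\<^sup>+ lam. ennreal ((cmod (Fh \<xi> lam))\<^sup>2 / (1 + \<bar>lam\<bar>) powr (2*(1-\<alpha>))) \<partial>lborel) \<partial>lborel)
   + enn_sqrt (\<integral>\<^sup>+ \<xi>. (\<integral>\<^sup>+ lam. ennreal (cmod (Fh \<xi> lam) / (1 + \<bar>lam - \<xi>^3\<bar>)) \<partial>lborel)\<^sup>2 \<partial>lborel)"

text \<open>Spatial Fourier transform (in x, at frequency xi) of the Duhamel term
  u(x,t) = int_0^t S(t-t') w(.,t') dt', written in terms of the space-time
  Fourier transform wh of w:  uh(xi,t) = int (e^{it lambda} - e^{it xi^3}) / (i(lambda - xi^3)) wh(xi,lambda) dlambda.\<close>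
definition duhamel_x_hat :: "(real \<Rightarrow> real \<Rightarrow> complex) \<Rightarrow> real \<Rightarrow> real \<Rightarrow> complex" where
  "duhamel_x_hat wh \<xi> t =
     (LINT lam|lborel. (exp (\<i> * complex_of_real (t*lam)) - exp (\<i> * complex_of_real (t*\<xi>^3)))
                      / (\<i> * complex_of_real (lam - \<xi>^3)) * wh \<xi> lam)"

text \<open>Space-time Fourier transform of theta(t) * (Duhamel term):
  Fourier transform in t of theta(t) uh(xi,t), with the normalisation matching
  the inversion formula w = \<integral>\<integral> e^{i(x xi + t lambda)} wh.\<close>
definition cutoff_duhamel_hat ::
  "(real \<Rightarrow> real) \<Rightarrow> (real \<Rightarrow> real \<Rightarrow> complex) \<Rightarrow> real \<Rightarrow> real \<Rightarrow> complex" where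
  "cutoff_duhamel_hat \<theta> wh \<xi> lam =
     (LINT t|lborel. exp (- \<i> * complex_of_real (t*lam)) * complex_of_real (\<theta> t) * duhamel_x_hat wh \<xi> t)
       / complex_of_real (2*pi)"

end

theory Submission
  imports Defs
begin

lemma vd_bound:
  fixes f f' :: "real \<Rightarrow> complex"
  assumes "\<And>t. (f has_vector_derivative f' t) (at t)" "\<And>t. norm (f' t) \<le> B"
  shows "norm (f x - f y) \<le> B * \<bar>x - y\<bar>"
proof -
  have "norm (f x - f y) \<le> B * norm (x - y)"
  proof (rule differentiable_bound[of UNIV f "\<lambda>t h. h *\<^sub>R f' t"])
    show "(f has_derivative (\<lambda>h. h *\<^sub>R f' t)) (at t within UNIV)" for t
      using assms(1)[of t] by (simp add: has_vector_derivative_def)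
    show "onorm (\<lambda>h. h *\<^sub>R f' t) \<le> B" for t
      using onorm_scaleR_left[OF bounded_linear_ident, of "f' t"] assms(2)[of t]
      by (simp add: onorm_id)
  qed auto
  then show ?thesis by simp
qed

lemma second_diff_bound:
  fixes f f' f'' :: "real \<Rightarrow> complex"
  assumes d1: "\<And>t. (f has_vector_derivative f' t) (at t)"
    and d2: "\<And>t. (f' has_vector_derivative f'' t) (at t)"
    and b: "\<And>t. norm (f'' t) \<le> M"
  shows "norm (f t - 2 * f (t + h) + f (t + 2*h)) \<le> M * h\<^sup>2"
proof -
  define g where "g x = f (x + h) - f x" for x
  define g' where "g' x = f' (x + h) - f' x" for x
  have "(g has_vector_derivative g' x) (at x)" for x
    unfolding g_def g'_def
  proof -
    have "((\<lambda>x. x + h) has_vector_derivative 1) (at x)"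
      by (auto intro!: derivative_eq_intros)
    from vector_diff_chain_at[OF this d1[of "x+h"]]
    have "((\<lambda>x. f (x + h)) has_vector_derivative f' (x + h)) (at x)" by (simp add: o_def)
    then show "((\<lambda>x. f (x + h) - f x) has_vector_derivative f' (x + h) - f' x) (at x)"
      using has_vector_derivative_diff[OF _ d1[of x]] by blast
  qed
  moreover have "norm (g' x) \<le> M * \<bar>h\<bar>" for x
    using vd_bound[OF d2 b, of "x+h" x] by (simp add: g'_def)
  ultimately have "norm (g (t+h) - g t) \<le> (M * \<bar>h\<bar>) * \<bar>(t+h) - t\<bar>"
    by (rule vd_bound)
  then show ?thesis by (simp add: g_def algebra_simps power2_eq_square abs_mult_self_eq)
qed

lemma integrable_cont_supp:
  fixes f :: "real \<Rightarrow> complex"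
  assumes "continuous_on UNIV f" "\<And>t. R < \<bar>t\<bar> \<Longrightarrow> f t = 0"
  shows "integrable lborel f"
proof -
  have "integrable lborel (\<lambda>x. indicator {-R..R} x *\<^sub>R f x)"
    by (rule borel_integrable_compact) (auto intro: continuous_on_subset[OF assms(1)])
  moreover have "(\<lambda>x. indicator {-R..R} x *\<^sub>R f x) = f"
    using assms(2) by (auto simp: indicator_def fun_eq_iff abs_le_iff not_le)
  ultimately show ?thesis by simp
qed

lemma norm_integral_nn:
  fixes f :: "_ \<Rightarrow> 'b::{banach, second_countable_topology}"
  shows "ennreal (norm (integral\<^sup>L M f)) \<le> (\<integral>\<^sup>+x. ennreal (norm (f x)) \<partial>M)"
proof (cases "integrable M f")
  case True then show ?thesis by (rule integral_norm_bound_ennreal)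
next
  case False then show ?thesis by (simp add: not_integrable_integral_eq)
qed

lemma lint_shift:
  fixes F :: "real \<Rightarrow> 'b::{banach, second_countable_topology}"
  shows "(LINT t|lborel. F (t + h)) = (LINT t|lborel. F t)"
  using lborel_integral_real_affine[where c=1 and t=h and f=F] by (simp add: add.commute)

lemma nn_indicator_interval:
  assumes "a \<le> b" "c \<ge> 0"
  shows "(\<integral>\<^sup>+t. ennreal (c * indicator {a..b} t) \<partial>lborel) = ennreal (c * (b - a))"
proof -
  have "(\<integral>\<^sup>+t. ennreal (c * indicator {a..b} t) \<partial>lborel) = (\<integral>\<^sup>+t. ennreal c * indicator {a..b} t \<partial>lborel)"
    by (intro nn_integral_cong) (auto simp: indicator_def)
  also have "\<dots> = ennreal c * ennreal (b - a)"
    using assms by (simp add: nn_integral_cmult_indicator)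
  finally show ?thesis using assms by (simp add: ennreal_mult)
qed

lemma nn_le_real:
  assumes "ennreal x \<le> ennreal y" "y \<ge> 0" shows "x \<le> y"
  using assms by (simp add: ennreal_le_iff)

lemma decay:
  fixes f f' f'' :: "real \<Rightarrow> complex"
  assumes d1: "\<And>t. (f has_vector_derivative f' t) (at t)"
    and d2: "\<And>t. (f' has_vector_derivative f'' t) (at t)"
    and b2: "\<And>t. norm (f'' t) \<le> M2"
    and b0: "\<And>t. norm (f t) \<le> M0"
    and supp: "\<And>t. R < \<bar>t\<bar> \<Longrightarrow> f t = 0" and R: "R \<ge> 0"
  shows "norm (LINT t|lborel. exp (- \<i> * complex_of_real (t*\<tau>)) * f t)
     \<le> max (2*R*M0*(1+pi\<^sup>2)) (M2*pi\<^sup>2*(2*R+4)/2) / (1 + \<tau>\<^sup>2)"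
proof -
  define E where "E t = exp (- \<i> * complex_of_real (t*\<tau>))" for t
  define I where "I = (LINT t|lborel. E t * f t)"
  have M0: "M0 \<ge> 0" using b0[of 0] norm_ge_zero order_trans by blast
  have M2: "M2 \<ge> 0" using b2[of 0] norm_ge_zero order_trans by blast
  have contf: "continuous_on UNIV f" by (rule continuous_on_vector_derivative) (use d1 in auto)
  have contE: "continuous_on UNIV E" unfolding E_def by (intro continuous_intros)
  have normE: "norm (E t) = 1" for t unfolding E_def by (simp add: norm_exp_i_times[of "- (t*\<tau>)", simplified])
  show ?thesis
  proof (cases "\<bar>\<tau>\<bar> \<le> pi")
    case True
    have "ennreal (norm I) \<le> (\<integral>\<^sup>+t. ennreal (norm (E t * f t)) \<partial>lborel)"
      unfolding I_def by (rule norm_integral_nn)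
    also have "\<dots> \<le> (\<integral>\<^sup>+t. ennreal (M0 * indicator {-R..R} t) \<partial>lborel)"
    proof (intro nn_integral_mono ennreal_leI)
      fix t show "norm (E t * f t) \<le> M0 * indicator {-R..R} t"
        using supp[of t] b0[of t] by (cases "\<bar>t\<bar> \<le> R") (auto simp: norm_mult normE indicator_def abs_le_iff)
    qed
    also have "\<dots> = ennreal (M0 * (R - (-R)))" using R M0 by (intro nn_indicator_interval) auto
    finally have "norm I \<le> M0 * (R - - R)" by (rule nn_le_real) (use R M0 in auto)
    then have "norm I \<le> 2*R*M0" by (simp add: mult_ac)
    also have "\<dots> = 2*R*M0*(1+pi\<^sup>2) / (1+pi\<^sup>2)"
    proof -
      have "(1::real) + pi\<^sup>2 > 0" by (intro add_pos_nonneg) auto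
      then show ?thesis by simp
    qed
    also have "\<dots> \<le> 2*R*M0*(1+pi\<^sup>2) / (1+\<tau>\<^sup>2)"
    proof (intro divide_left_mono mult_nonneg_nonneg)
      have "\<tau>\<^sup>2 \<le> pi\<^sup>2" using power_mono[OF True abs_ge_zero, of 2] by simp
      then show "1 + \<tau>\<^sup>2 \<le> 1 + pi\<^sup>2" by simp
    qed (use R M0 in \<open>auto intro!: mult_pos_pos add_pos_nonneg\<close>)
    also have "\<dots> \<le> max (2*R*M0*(1+pi\<^sup>2)) (M2*pi\<^sup>2*(2*R+4)/2) / (1 + \<tau>\<^sup>2)"
      by (intro divide_right_mono) auto
    finally show ?thesis unfolding I_def E_def .
  next
    case False
    define h where "h = pi / \<tau>"
    have tau0: "\<tau> \<noteq> 0" using False by auto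
    have pt: "pi \<le> \<bar>\<tau>\<bar>" using False by simp
    have "\<bar>h\<bar> = pi / \<bar>\<tau>\<bar>" by (simp add: h_def abs_divide)
    also have "\<dots> \<le> 1" using pt tau0 by (simp add: divide_le_eq)
    finally have hle: "\<bar>h\<bar> \<le> 1" .
    have Eh: "E (t + h) = - E t" for t
    proof -
      have "(t+h)*\<tau> = t*\<tau> + pi" using tau0 by (simp add: h_def distrib_right)
      then have "E (t + h) = exp (- \<i> * complex_of_real (t*\<tau>) + (- \<i> * complex_of_real pi))"
        unfolding E_def by (simp add: distrib_left)
      also have "\<dots> = E t * exp (- \<i> * complex_of_real pi)" unfolding E_def by (rule exp_add)
      finally have "E (t + h) = E t * exp (- \<i> * complex_of_real pi)" .
      then show ?thesis by (simp add: exp_minus)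
    qed
    have E2h: "E (t + 2*h) = E t" for t
      using Eh[of "t+h"] Eh[of t] by (simp add: add.assoc)
    have intg: "integrable lborel (\<lambda>t. E t * f (t + c))" if "\<bar>c\<bar> \<le> 2" for c
    proof (rule integrable_cont_supp[where R="R+2"])
      show "continuous_on UNIV (\<lambda>t. E t * f (t + c))"
      proof -
        have "continuous_on UNIV (\<lambda>t. f (t + c))"
          by (rule continuous_on_compose2[OF contf, of UNIV "\<lambda>t. t + c"]) (auto intro: continuous_intros)
        then show ?thesis by (intro continuous_on_mult contE)
      qed
      show "E t * f (t + c) = 0" if "R + 2 < \<bar>t\<bar>" for t
        using supp[of "t+c"] that \<open>\<bar>c\<bar> \<le> 2\<close> by auto
    qed
    have I1: "(LINT t|lborel. E t * f (t + h)) = - I"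
    proof -
      have "I = (LINT t|lborel. E (t+h) * f (t + h))" unfolding I_def by (rule lint_shift[symmetric])
      also have "\<dots> = - (LINT t|lborel. E t * f (t + h))" by (simp add: Eh)
      finally show ?thesis by simp
    qed
    have I2: "(LINT t|lborel. E t * f (t + 2*h)) = I"
    proof -
      have "I = (LINT t|lborel. E (t+2*h) * f (t + 2*h))" unfolding I_def by (rule lint_shift[symmetric])
      then show ?thesis by (simp add: E2h)
    qed
    have "(LINT t|lborel. E t * (f t - 2 * f (t + h) + f (t + 2*h)))
        = (LINT t|lborel. E t * f t - 2 * (E t * f (t + h)) + E t * f (t + 2*h))"
      by (simp add: algebra_simps)
    also have "\<dots> = (LINT t|lborel. E t * f t) - 2 * (LINT t|lborel. E t * f (t+h)) + (LINT t|lborel. E t * f (t+2*h))"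
    proof -
      have i0: "integrable lborel (\<lambda>t. E t * f t)" using intg[of 0] by simp
      have i1: "integrable lborel (\<lambda>t. E t * f (t+h))" using intg[of h] hle by simp
      have i2: "integrable lborel (\<lambda>t. E t * f (t+2*h))" using intg[of "2*h"] hle by simp
      have i1': "integrable lborel (\<lambda>t. 2 * (E t * f (t+h)))" using i1 by (rule integrable_mult_right)
      show ?thesis
        by (subst Bochner_Integration.integral_add[OF Bochner_Integration.integrable_diff[OF i0 i1'] i2],
            subst Bochner_Integration.integral_diff[OF i0 i1'], subst Bochner_Integration.integral_mult_right[OF i1]) (rule refl)
    qed
    also have "\<dots> = I - 2 * (-I) + I" by (simp only: I1 I2 I_def)
    finally have 4: "(LINT t|lborel. E t * (f t - 2 * f (t + h) + f (t + 2*h))) = 4 * I" by simp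
    have "ennreal (norm (4 * I)) \<le> (\<integral>\<^sup>+t. ennreal (norm (E t * (f t - 2 * f (t + h) + f (t + 2*h)))) \<partial>lborel)"
      unfolding 4[symmetric] by (rule norm_integral_nn)
    also have "\<dots> \<le> (\<integral>\<^sup>+t. ennreal ((M2 * h\<^sup>2) * indicator {-(R+2)..R+2} t) \<partial>lborel)"
    proof (intro nn_integral_mono ennreal_leI)
      fix t
      show "norm (E t * (f t - 2 * f (t + h) + f (t + 2*h))) \<le> (M2 * h\<^sup>2) * indicator {-(R+2)..R+2} t"
      proof (cases "\<bar>t\<bar> \<le> R + 2")
        case True
        then show ?thesis using second_diff_bound[OF d1 d2 b2, of t h]
          by (simp add: norm_mult normE indicator_def abs_le_iff)
      next
        case False
        then have "f t = 0" "f (t+h) = 0" "f (t+2*h) = 0" using supp hle by auto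
        then show ?thesis using M2 by simp
      qed
    qed
    also have "\<dots> = ennreal ((M2 * h\<^sup>2) * ((R+2) - (-(R+2))))"
      using R M2 by (intro nn_indicator_interval) auto
    finally have "norm (4*I) \<le> (M2 * h\<^sup>2) * ((R+2) - (-(R+2)))"
      by (rule nn_le_real) (use R M2 in auto)
    then have "norm (4*I) \<le> (M2 * h\<^sup>2) * (2*R+4)" by (simp add: algebra_simps)
    then have "norm I \<le> M2 * h\<^sup>2 * (2*R+4) / 4" by (simp add: norm_mult)
    also have "M2 * h\<^sup>2 * (2*R+4) / 4 = M2 * pi\<^sup>2 * (2*R+4) / 4 / \<tau>\<^sup>2"
      unfolding h_def by (simp add: power_divide)
    also have "\<dots> \<le> M2 * pi\<^sup>2 * (2*R+4) / 4 * (2 / (1 + \<tau>\<^sup>2))"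
    proof -
      have "1 \<le> \<bar>\<tau>\<bar>" using pt pi_gt3 by linarith
      then have "1 \<le> \<bar>\<tau>\<bar>^2" by (rule one_le_power)
      then have t1: "1 \<le> \<tau>\<^sup>2" by simp
      then have "1 / \<tau>\<^sup>2 \<le> 2 / (1 + \<tau>\<^sup>2)" using t1 by (simp add: divide_simps)
      from mult_left_mono[OF this, of "M2 * pi\<^sup>2 * (2*R+4) / 4"]
      show ?thesis using R M2 by simp
    qed
    also have "\<dots> = (M2*pi\<^sup>2*(2*R+4)/2) / (1 + \<tau>\<^sup>2)" by simp
    also have "\<dots> \<le> max (2*R*M0*(1+pi\<^sup>2)) (M2*pi\<^sup>2*(2*R+4)/2) / (1 + \<tau>\<^sup>2)"
      by (intro divide_right_mono) auto
    finally show ?thesis unfolding I_def E_def .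
  qed
qed

lemma cont_supp_bounded:
  fixes g :: "real \<Rightarrow> 'a::real_normed_vector"
  assumes "continuous_on UNIV g" "\<And>t. R < \<bar>t\<bar> \<Longrightarrow> g t = 0"
  shows "\<exists>B\<ge>0. \<forall>t. norm (g t) \<le> B"
proof -
  have "compact (g ` {-R..R})"
    by (rule compact_continuous_image) (auto intro: continuous_on_subset[OF assms(1)])
  then obtain B where B: "B > 0" "\<forall>x\<in>g ` {-R..R}. norm x \<le> B"
    using compact_imp_bounded bounded_pos by metis
  have "norm (g t) \<le> B" for t
  proof (cases "\<bar>t\<bar> \<le> R")
    case True then show ?thesis using B by (auto simp: abs_le_iff)
  next
    case False then show ?thesis using assms(2)[of t] B by auto
  qed
  then show ?thesis using B by (intro exI[of _ B]) auto
qed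

lemma deriv_zero_outside:
  fixes g :: "real \<Rightarrow> real"
  assumes "\<And>t. R < \<bar>t\<bar> \<Longrightarrow> g t = 0" "R < \<bar>t\<bar>"
  shows "deriv g t = 0"
proof -
  have "((\<lambda>_. 0) has_real_derivative 0) (at t)" by simp
  then have "(g has_real_derivative 0) (at t)"
    by (rule has_field_derivative_transform_within_open[where S="{t. R < \<bar>t\<bar>}"])
       (use assms in \<open>auto intro!: open_Collect_less continuous_intros\<close>)
  then show ?thesis by (rule DERIV_imp_deriv)
qed

lemma theta_props:
  assumes "C0_infty \<theta>"
  obtains R B0 B1 B2 where "R \<ge> 0"
    "\<And>t. (\<theta> has_real_derivative deriv \<theta> t) (at t)"
    "\<And>t. (deriv \<theta> has_real_derivative deriv (deriv \<theta>) t) (at t)"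
    "\<And>t. R < \<bar>t\<bar> \<Longrightarrow> \<theta> t = 0"
    "\<And>t. R < \<bar>t\<bar> \<Longrightarrow> deriv \<theta> t = 0"
    "\<And>t. R < \<bar>t\<bar> \<Longrightarrow> deriv (deriv \<theta>) t = 0"
    "\<And>t. \<bar>\<theta> t\<bar> \<le> B0" "\<And>t. \<bar>deriv \<theta> t\<bar> \<le> B1" "\<And>t. \<bar>deriv (deriv \<theta>) t\<bar> \<le> B2"
proof -
  have sm: "\<And>n x. ((deriv ^^ n) \<theta>) differentiable (at x)" and bd: "bounded {t. \<theta> t \<noteq> 0}"
    using assms unfolding C0_infty_def smooth_fun_def by auto
  have d0: "(\<theta> has_real_derivative deriv \<theta> t) (at t)" for t
    using sm[of 0 t] by (simp add: DERIV_deriv_iff_real_differentiable)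
  have d1: "(deriv \<theta> has_real_derivative deriv (deriv \<theta>) t) (at t)" for t
    using sm[of 1 t] by (simp add: DERIV_deriv_iff_real_differentiable)
  have c2: "continuous_on UNIV (deriv (deriv \<theta>))"
    using sm[of 2] by (intro differentiable_imp_continuous_on) (auto simp: differentiable_on_def numeral_2_eq_2 intro: differentiable_at_withinI)
  have c1: "continuous_on UNIV (deriv \<theta>)"
    using d1 by (intro continuous_on_vector_derivative) (auto simp: has_real_derivative_iff_has_vector_derivative[symmetric] intro: has_field_derivative_at_within)
  have c0: "continuous_on UNIV \<theta>"
    using d0 by (intro continuous_on_vector_derivative) (auto simp: has_real_derivative_iff_has_vector_derivative[symmetric] intro: has_field_derivative_at_within)
  obtain R0 where R0: "R0 > 0" "\<forall>x\<in>{t. \<theta> t \<noteq> 0}. norm x \<le> R0" using bd bounded_pos by metis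
  have z0: "\<theta> t = 0" if "R0 < \<bar>t\<bar>" for t using R0 that by force
  have z1: "deriv \<theta> t = 0" if "R0 < \<bar>t\<bar>" for t using deriv_zero_outside[OF z0 that] by auto
  have z2: "deriv (deriv \<theta>) t = 0" if "R0 < \<bar>t\<bar>" for t using deriv_zero_outside[OF z1 that] by auto
  obtain B0 where "\<forall>t. norm (\<theta> t) \<le> B0" using cont_supp_bounded[OF c0 z0] by auto
  moreover obtain B1 where "\<forall>t. norm (deriv \<theta> t) \<le> B1" using cont_supp_bounded[OF c1 z1] by auto
  moreover obtain B2 where "\<forall>t. norm (deriv (deriv \<theta>) t) \<le> B2" using cont_supp_bounded[OF c2 z2] by auto
  ultimately show ?thesis using that[of R0 B0 B1 B2] R0 d0 d1 z0 z1 z2 by auto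
qed

lemma expd:
  fixes s t :: real
  shows "((\<lambda>t. exp (\<i> * complex_of_real (t * s))) has_vector_derivative (\<i> * of_real s * exp (\<i> * complex_of_real (t * s)))) (at t)"
proof -
  have "((\<lambda>z. exp (\<i> * (z * of_real s))) has_field_derivative exp (\<i> * (of_real t * of_real s)) * (\<i> * of_real s)) (at (of_real t))"
    by (auto intro!: derivative_eq_intros)
  from has_vector_derivative_real_field[OF this, of UNIV]
  show ?thesis by (simp add: ac_simps)
qed

lemma exp_i_norm [simp]: "norm (exp (\<i> * complex_of_real x)) = 1"
  using norm_exp_i_times[of x] by simp

lemma exp_i_diff_le: "norm (exp (\<i> * complex_of_real (t * s)) - 1) \<le> \<bar>s\<bar> * \<bar>t\<bar>"
proof -
  have "norm (exp (\<i> * complex_of_real (t * s)) - exp (\<i> * complex_of_real (0 * s))) \<le> \<bar>s\<bar> * \<bar>t - 0\<bar>"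
    by (rule vd_bound[OF expd]) (simp add: norm_mult)
  then show ?thesis by simp
qed

definition gg :: "real \<Rightarrow> real" where "gg x = 1 / (1 + x\<^sup>2)"

lemma gg_pos: "gg x > 0" unfolding gg_def by (simp add: add_pos_nonneg)

lemma exp_comb: "exp (- \<i> * complex_of_real (t*\<mu>)) * exp (\<i> * complex_of_real (t*l)) = exp (- \<i> * complex_of_real (t*(\<mu>-l)))"
proof -
  have "- \<i> * complex_of_real (t*(\<mu>-l)) = - \<i> * complex_of_real (t*\<mu>) + \<i> * complex_of_real (t*l)"
    by (simp add: algebra_simps)
  then show ?thesis by (simp only: exp_add)
qed

lemma integrable_exp_cont:
  fixes f :: "real \<Rightarrow> complex"
  assumes "continuous_on UNIV f" "\<And>t. R < \<bar>t\<bar> \<Longrightarrow> f t = 0"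
  shows "integrable lborel (\<lambda>t. exp (- \<i> * complex_of_real (t*\<tau>)) * f t)"
  by (rule integrable_cont_supp[where R=R]) (use assms in \<open>auto intro!: continuous_intros\<close>)

lemma kernel_bound:
  assumes "C0_infty \<theta>"
  shows "\<exists>K\<ge>0. \<forall>\<mu> lam a. norm (LINT t|lborel. exp (- \<i> * complex_of_real (t*\<mu>)) * complex_of_real (\<theta> t) *
     ((exp (\<i> * complex_of_real (t*lam)) - exp (\<i> * complex_of_real (t*a))) / (\<i> * complex_of_real (lam - a))))
     \<le> K * (gg (\<mu> - lam) + gg (\<mu> - a)) / (1 + \<bar>lam - a\<bar>)"
proof -
  obtain R B0 B1 B2 where R: "R \<ge> 0"
    and d0: "\<And>t. (\<theta> has_real_derivative deriv \<theta> t) (at t)"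
    and d1: "\<And>t. (deriv \<theta> has_real_derivative deriv (deriv \<theta>) t) (at t)"
    and z0: "\<And>t. R < \<bar>t\<bar> \<Longrightarrow> \<theta> t = 0"
    and z1: "\<And>t. R < \<bar>t\<bar> \<Longrightarrow> deriv \<theta> t = 0"
    and z2: "\<And>t. R < \<bar>t\<bar> \<Longrightarrow> deriv (deriv \<theta>) t = 0"
    and b0: "\<And>t. \<bar>\<theta> t\<bar> \<le> B0" and b1: "\<And>t. \<bar>deriv \<theta> t\<bar> \<le> B1" and b2: "\<And>t. \<bar>deriv (deriv \<theta>) t\<bar> \<le> B2"
    using theta_props[OF assms] by metis
  have B0: "B0 \<ge> 0" using b0[of 0] by linarith
  have B1: "B1 \<ge> 0" using b1[of 0] by linarith
  have B2: "B2 \<ge> 0" using b2[of 0] by linarith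
  define \<Theta> where "\<Theta> t = complex_of_real (\<theta> t)" for t
  define \<Theta>1 where "\<Theta>1 t = complex_of_real (deriv \<theta> t)" for t
  define \<Theta>2 where "\<Theta>2 t = complex_of_real (deriv (deriv \<theta>) t)" for t
  have D0: "(\<Theta> has_vector_derivative \<Theta>1 t) (at t)" for t
    unfolding \<Theta>_def \<Theta>1_def by (rule has_vector_derivative_of_real[OF d0])
  have D1: "(\<Theta>1 has_vector_derivative \<Theta>2 t) (at t)" for t
    unfolding \<Theta>2_def \<Theta>1_def by (rule has_vector_derivative_of_real[OF d1])
  have contT: "continuous_on UNIV \<Theta>"
    by (rule continuous_on_vector_derivative) (use D0 in \<open>auto intro: has_vector_derivative_at_within\<close>)
  define K0 where "K0 = max (2*R*B0*(1+pi\<^sup>2)) (B2*pi\<^sup>2*(2*R+4)/2)"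
  define K1 where "K1 = max (2*R*(B0*R)*(1+pi\<^sup>2)) ((B0+2*B1+B2*R)*pi\<^sup>2*(2*R+4)/2)"
  have K0: "K0 \<ge> 0" unfolding K0_def using R B0 B2 by (simp add: max_def)
  have K1: "K1 \<ge> 0" unfolding K1_def using R B0 B1 B2 by (simp add: max_def)
  have Tb: "norm (LINT t|lborel. exp (- \<i> * complex_of_real (t*\<tau>)) * \<Theta> t) \<le> K0 * gg \<tau>" for \<tau>
  proof -
    have "norm (LINT t|lborel. exp (- \<i> * complex_of_real (t*\<tau>)) * \<Theta> t) \<le> K0 / (1+\<tau>\<^sup>2)"
      unfolding K0_def
      by (rule decay[OF D0 D1 _ _ _ R]) (use b0 b2 z0 in \<open>auto simp: \<Theta>_def \<Theta>2_def\<close>)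
    then show ?thesis by (simp add: gg_def)
  qed
  have Pb: "norm (LINT t|lborel. exp (- \<i> * complex_of_real (t*\<tau>)) * (\<Theta> t * ((exp (\<i> * complex_of_real (t * s)) - 1) / (\<i> * complex_of_real s))))
     \<le> K1 * gg \<tau>" if s: "s \<noteq> 0" "\<bar>s\<bar> \<le> 1" for \<tau> s
  proof -
    define E where "E t = exp (\<i> * complex_of_real (t * s))" for t
    define m where "m t = (E t - 1) / (\<i> * complex_of_real s)" for t
    have si: "\<i> * complex_of_real s \<noteq> 0" using s by simp
    have DE: "(E has_vector_derivative (\<i> * of_real s * E t)) (at t)" for t
      unfolding E_def by (rule expd)
    have Dm: "(m has_vector_derivative E t) (at t)" for t
    proof -
      have "(m has_vector_derivative (\<i> * of_real s * E t - 0) / (\<i> * complex_of_real s)) (at t)"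
        unfolding m_def by (intro has_vector_derivative_divide has_vector_derivative_diff DE) auto
      then show ?thesis using si by simp
    qed
    have mb: "norm (m t) \<le> \<bar>t\<bar>" for t
    proof -
      have "norm (m t) = norm (E t - 1) / \<bar>s\<bar>" unfolding m_def by (simp add: norm_divide norm_mult)
      also have "\<dots> \<le> \<bar>s\<bar> * \<bar>t\<bar> / \<bar>s\<bar>" unfolding E_def by (intro divide_right_mono exp_i_diff_le) auto
      finally show ?thesis using s by simp
    qed
    have nE: "norm (E t) = 1" for t unfolding E_def by simp
    define f' where "f' t = \<Theta> t * E t + \<Theta>1 t * m t" for t
    define f'' where "f'' t = \<Theta> t * (\<i> * of_real s * E t) + \<Theta>1 t * E t + (\<Theta>1 t * E t + \<Theta>2 t * m t)" for t
    have Df: "((\<lambda>t. \<Theta> t * m t) has_vector_derivative f' t) (at t)" for t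
      unfolding f'_def by (rule has_vector_derivative_mult[OF D0 Dm])
    have Df': "(f' has_vector_derivative f'' t) (at t)" for t
    proof -
      have "((\<lambda>t. \<Theta> t * E t + \<Theta>1 t * m t) has_vector_derivative
          (\<Theta> t * (\<i> * of_real s * E t) + \<Theta>1 t * E t) + (\<Theta>1 t * E t + \<Theta>2 t * m t)) (at t)"
        by (intro has_vector_derivative_add has_vector_derivative_mult D0 D1 DE Dm)
      then show ?thesis unfolding f'_def f''_def .
    qed
    have bf'': "norm (f'' t) \<le> B0 + 2*B1 + B2*R" for t
    proof (cases "\<bar>t\<bar> \<le> R")
      case True
      have "norm (f'' t) \<le> norm (\<Theta> t * (\<i> * of_real s * E t)) + norm (\<Theta>1 t * E t) + (norm (\<Theta>1 t * E t) + norm (\<Theta>2 t * m t))"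
        unfolding f''_def by (intro order_trans[OF norm_triangle_ineq] add_mono order_refl norm_triangle_ineq)
      also have "\<dots> \<le> B0 * 1 + B1 + (B1 + B2 * R)"
      proof (intro add_mono)
        show "norm (\<Theta> t * (\<i> * of_real s * E t)) \<le> B0 * 1"
          using mult_mono[OF b0[of t] \<open>\<bar>s\<bar> \<le> 1\<close> B0 abs_ge_zero] by (simp add: \<Theta>_def norm_mult nE)
        show "norm (\<Theta>1 t * E t) \<le> B1" using b1[of t] by (simp add: \<Theta>1_def norm_mult nE)
        show "norm (\<Theta>1 t * E t) \<le> B1" using b1[of t] by (simp add: \<Theta>1_def norm_mult nE)
        show "norm (\<Theta>2 t * m t) \<le> B2 * R"
          unfolding norm_mult \<Theta>2_def norm_of_real
          by (rule mult_mono) (use b2[of t] mb[of t] True B2 in auto)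
      qed
      finally show ?thesis by simp
    next
      case False then show ?thesis using z0[of t] z1[of t] z2[of t] B0 B1 B2 R
        by (simp add: f''_def \<Theta>_def \<Theta>1_def \<Theta>2_def)
    qed
    have bf: "norm (\<Theta> t * m t) \<le> B0 * R" for t
    proof (cases "\<bar>t\<bar> \<le> R")
      case True then show ?thesis unfolding norm_mult \<Theta>_def norm_of_real
        by (intro mult_mono) (use b0[of t] mb[of t] B0 in auto)
    next
      case False then show ?thesis using z0[of t] B0 R by (simp add: \<Theta>_def)
    qed
    have "norm (LINT t|lborel. exp (- \<i> * complex_of_real (t*\<tau>)) * (\<Theta> t * m t)) \<le> K1 / (1+\<tau>\<^sup>2)"
      unfolding K1_def
      by (rule decay[OF Df Df' bf'' bf _ R]) (use z0 in \<open>auto simp: \<Theta>_def\<close>)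
    then show ?thesis by (simp add: gg_def m_def E_def)
  qed
  show ?thesis
  proof (intro exI[of _ "2*(K0+K1)"] conjI allI)
    show "0 \<le> 2*(K0+K1)" using K0 K1 by simp
    fix \<mu> lam a :: real
    define s where "s = lam - a"
    define c where "c = \<i> * complex_of_real s"
    define Ik where "Ik = (LINT t|lborel. exp (- \<i> * complex_of_real (t*\<mu>)) * complex_of_real (\<theta> t) *
     ((exp (\<i> * complex_of_real (t*lam)) - exp (\<i> * complex_of_real (t*a))) / (\<i> * complex_of_real (lam - a))))"
    define G where "G = gg (\<mu> - lam) + gg (\<mu> - a)"
    have G: "G > 0" unfolding G_def using gg_pos by (simp add: add_pos_pos)
    have fe: "exp (- \<i> * complex_of_real (t*\<mu>)) * complex_of_real (\<theta> t) *
       ((exp (\<i> * complex_of_real (t*lam)) - exp (\<i> * complex_of_real (t*a))) / (\<i> * complex_of_real (lam - a)))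
      = \<Theta> t * (exp (- \<i> * complex_of_real (t*(\<mu>-lam))) - exp (- \<i> * complex_of_real (t*(\<mu>-a)))) / c" for t
    proof -
      have "exp (- \<i> * complex_of_real (t*\<mu>)) * complex_of_real (\<theta> t) *
       ((exp (\<i> * complex_of_real (t*lam)) - exp (\<i> * complex_of_real (t*a))) / (\<i> * complex_of_real (lam - a)))
       = \<Theta> t * (exp (- \<i> * complex_of_real (t*\<mu>)) * exp (\<i> * complex_of_real (t*lam)) - exp (- \<i> * complex_of_real (t*\<mu>)) * exp (\<i> * complex_of_real (t*a))) / c"
        unfolding c_def s_def \<Theta>_def by (simp add: algebra_simps)
      then show ?thesis by (simp only: exp_comb)
    qed
    consider "s = 0" | "\<bar>s\<bar> > 1" | "s \<noteq> 0" "\<bar>s\<bar> \<le> 1" by linarith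
    then have "norm Ik \<le> 2*(K0+K1) * G / (1 + \<bar>s\<bar>)"
    proof cases
      case 1
      then have "Ik = 0" unfolding Ik_def s_def by simp
      then show ?thesis using K0 K1 G by simp
    next
      case 2
      have cz: "c \<noteq> 0" using 2 by (auto simp: c_def)
      have "Ik = (LINT t|lborel. (1/c) * (exp (- \<i> * complex_of_real (t*(\<mu>-lam))) * \<Theta> t - exp (- \<i> * complex_of_real (t*(\<mu>-a))) * \<Theta> t))"
        unfolding Ik_def fe by (simp add: algebra_simps diff_divide_distrib)
      also have "\<dots> = (1/c) * ((LINT t|lborel. exp (- \<i> * complex_of_real (t*(\<mu>-lam))) * \<Theta> t) - (LINT t|lborel. exp (- \<i> * complex_of_real (t*(\<mu>-a))) * \<Theta> t))"
      proof -
        have i1: "integrable lborel (\<lambda>t. exp (- \<i> * complex_of_real (t*(\<mu>-lam))) * \<Theta> t)"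
          by (rule integrable_exp_cont[OF contT, where R=R]) (simp add: \<Theta>_def z0)
        have i2: "integrable lborel (\<lambda>t. exp (- \<i> * complex_of_real (t*(\<mu>-a))) * \<Theta> t)"
          by (rule integrable_exp_cont[OF contT, where R=R]) (simp add: \<Theta>_def z0)
        show ?thesis by (simp only: integral_mult_right_zero Bochner_Integration.integral_diff[OF i1 i2])
      qed
      finally have Ieq: "Ik = (1/c) * ((LINT t|lborel. exp (- \<i> * complex_of_real (t*(\<mu>-lam))) * \<Theta> t) - (LINT t|lborel. exp (- \<i> * complex_of_real (t*(\<mu>-a))) * \<Theta> t))" .
      have "norm Ik = norm ((LINT t|lborel. exp (- \<i> * complex_of_real (t*(\<mu>-lam))) * \<Theta> t) - (LINT t|lborel. exp (- \<i> * complex_of_real (t*(\<mu>-a))) * \<Theta> t)) / \<bar>s\<bar>"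
        unfolding Ieq by (simp add: c_def norm_mult norm_divide)
      also have "\<dots> \<le> (norm (LINT t|lborel. exp (- \<i> * complex_of_real (t*(\<mu>-lam))) * \<Theta> t) + norm (LINT t|lborel. exp (- \<i> * complex_of_real (t*(\<mu>-a))) * \<Theta> t)) / \<bar>s\<bar>"
        by (intro divide_right_mono norm_triangle_ineq4) auto
      also have "\<dots> \<le> (K0 * gg (\<mu>-lam) + K0 * gg (\<mu>-a)) / \<bar>s\<bar>"
        by (intro divide_right_mono add_mono Tb) auto
      also have "\<dots> = (1/\<bar>s\<bar>) * K0 * G" by (simp add: G_def algebra_simps add_divide_distrib)
      also have "\<dots> \<le> (2/(1+\<bar>s\<bar>)) * (K0+K1) * G"
      proof (intro mult_mono)
        show "1/\<bar>s\<bar> \<le> 2/(1+\<bar>s\<bar>)" using 2 by (simp add: divide_simps)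
      qed (use K0 K1 G 2 in auto)
      finally show ?thesis by simp
    next
      case 3
      have cz: "c \<noteq> 0" using 3 by (auto simp: c_def)
      have e3: "exp (- \<i> * complex_of_real (t*(\<mu>-a))) * exp (\<i> * complex_of_real (t * s)) = exp (- \<i> * complex_of_real (t*(\<mu>-lam)))" for t
        using exp_comb[of t "\<mu>-a" s] by (simp add: s_def)
      have "Ik = (LINT t|lborel. exp (- \<i> * complex_of_real (t*(\<mu>-a))) * (\<Theta> t * ((exp (\<i> * complex_of_real (t * s)) - 1) / (\<i> * complex_of_real s))))"
        unfolding Ik_def fe
      proof (intro Bochner_Integration.integral_cong refl)
        fix t
        have "exp (- \<i> * complex_of_real (t*(\<mu>-a))) * (\<Theta> t * ((exp (\<i> * complex_of_real (t * s)) - 1) / (\<i> * complex_of_real s)))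
          = \<Theta> t * (exp (- \<i> * complex_of_real (t*(\<mu>-a))) * exp (\<i> * complex_of_real (t * s)) - exp (- \<i> * complex_of_real (t*(\<mu>-a)))) / c"
          unfolding c_def by (simp add: algebra_simps)
        then show "\<Theta> t * (exp (- \<i> * complex_of_real (t*(\<mu>-lam))) - exp (- \<i> * complex_of_real (t*(\<mu>-a)))) / c =
          exp (- \<i> * complex_of_real (t*(\<mu>-a))) * (\<Theta> t * ((exp (\<i> * complex_of_real (t * s)) - 1) / (\<i> * complex_of_real s)))"
          by (simp only: e3)
      qed
      also have "norm \<dots> \<le> K1 * gg (\<mu>-a)" using Pb 3 by blast
      also have "\<dots> \<le> K1 * G" using K1 by (intro mult_left_mono) (auto simp: G_def gg_pos less_imp_le)
      also have "\<dots> \<le> (2/(1+\<bar>s\<bar>)) * (K0+K1) * G"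
      proof -
        have "1 \<le> 2/(1+\<bar>s\<bar>)" using 3 by (simp add: divide_simps) linarith
        from mult_mono[OF this, of K1 "K0+K1"] K0 K1 have "K1 \<le> (2/(1+\<bar>s\<bar>)) * (K0+K1)" by simp
        from mult_right_mono[OF this, of G] G show ?thesis by simp
      qed
      finally show ?thesis by simp
    qed
    then show "norm Ik \<le> 2*(K0+K1) * (gg (\<mu> - lam) + gg (\<mu> - a)) / (1 + \<bar>lam - a\<bar>)"
      by (simp add: G_def s_def)
  qed
qed

lemma nn_reflect:
  fixes f :: "real \<Rightarrow> ennreal"
  assumes [measurable]: "f \<in> borel_measurable borel"
  shows "(\<integral>\<^sup>+x. f (- x) \<partial>lborel) = (\<integral>\<^sup>+x. f x \<partial>lborel)"
  using nn_integral_real_affine[of f "-1" 0] by simp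

lemma nn_shift:
  fixes f :: "real \<Rightarrow> ennreal"
  assumes [measurable]: "f \<in> borel_measurable borel"
  shows "(\<integral>\<^sup>+x. f (x - c) \<partial>lborel) = (\<integral>\<^sup>+x. f x \<partial>lborel)"
  using nn_integral_real_affine[of f 1 "-c"] by simp

lemma nn_shift_rev:
  fixes f :: "real \<Rightarrow> ennreal"
  assumes [measurable]: "f \<in> borel_measurable borel"
  shows "(\<integral>\<^sup>+x. f (c - x) \<partial>lborel) = (\<integral>\<^sup>+x. f x \<partial>lborel)"
  using nn_integral_real_affine[of f "-1" c] by simp

lemma pow_half:
  fixes q :: real assumes q: "q < -1"
  shows "(\<integral>\<^sup>+x. ennreal ((1+x) powr q) * indicator {0..} x \<partial>lborel) = ennreal (0 - (1+0) powr (q+1) / (q+1))"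
proof (rule nn_integral_FTC_atLeast)
  show "(\<lambda>x. (1+x) powr q) \<in> borel_measurable borel" by measurable
  show "((\<lambda>x. (1+x) powr (q+1) / (q+1)) has_real_derivative (1+x) powr q) (at x)" if "0 \<le> x" for x
  proof -
    have "((\<lambda>x. (1+x) powr (q+1) / (q+1)) has_real_derivative ((q+1) * (1+x) powr (q+1-1) * 1) / (q+1)) (at x)"
      using that q by (intro derivative_eq_intros) auto
    then show ?thesis using q by simp
  qed
  show "0 \<le> (1+x) powr q" for x by simp
  have "((\<lambda>x. (1+x) powr (q+1)) \<longlongrightarrow> 0) at_top"
    by (rule tendsto_neg_powr) (use q in \<open>auto intro!: filterlim_tendsto_add_at_top filterlim_ident\<close>)
  then show "((\<lambda>x. (1+x) powr (q+1) / (q+1)) \<longlongrightarrow> 0) at_top"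
    by (rule tendsto_divide_zero)
qed

lemma fin_pow:
  fixes q :: real assumes q: "q < -1"
  shows "(\<integral>\<^sup>+x. ennreal ((1+\<bar>x\<bar>) powr q) \<partial>lborel) < \<infinity>"
proof -
  define \<phi> where "\<phi> x = ennreal ((1+x) powr q) * indicator {0..} x" for x
  have [measurable]: "\<phi> \<in> borel_measurable borel" unfolding \<phi>_def by measurable
  have "(\<integral>\<^sup>+x. ennreal ((1+\<bar>x\<bar>) powr q) \<partial>lborel) \<le> (\<integral>\<^sup>+x. \<phi> x + \<phi> (-x) \<partial>lborel)"
    by (intro nn_integral_mono) (auto simp: \<phi>_def indicator_def)
  also have "\<dots> = (\<integral>\<^sup>+x. \<phi> x \<partial>lborel) + (\<integral>\<^sup>+x. \<phi> (-x) \<partial>lborel)"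
    by (rule nn_integral_add) auto
  also have "\<dots> = 2 * (\<integral>\<^sup>+x. \<phi> x \<partial>lborel)" by (simp add: nn_reflect mult_2)
  also have "\<dots> < \<infinity>" unfolding \<phi>_def pow_half[OF q] by (simp add: ennreal_mult_less_top)
  finally show ?thesis .
qed

lemma young:
  fixes h :: "real \<Rightarrow> real" and V :: "real \<Rightarrow> ennreal"
  assumes hm[measurable]: "h \<in> borel_measurable borel" and Vm[measurable]: "V \<in> borel_measurable borel"
    and hpos: "\<And>x. h x \<ge> 0"
  shows "(\<integral>\<^sup>+\<mu>. (\<integral>\<^sup>+l. ennreal (h (\<mu> - l)) * V l \<partial>lborel)\<^sup>2 \<partial>lborel)
     \<le> (\<integral>\<^sup>+x. ennreal (h x) \<partial>lborel)\<^sup>2 * (\<integral>\<^sup>+l. (V l)\<^sup>2 \<partial>lborel)"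
proof -
  define H where "H = (\<integral>\<^sup>+x. ennreal (h x) \<partial>lborel)"
  have pt: "(\<integral>\<^sup>+l. ennreal (h (\<mu> - l)) * V l \<partial>lborel)\<^sup>2 \<le> H * (\<integral>\<^sup>+l. ennreal (h (\<mu> - l)) * (V l)\<^sup>2 \<partial>lborel)" for \<mu>
  proof -
    define f where "f l = ennreal (sqrt (h (\<mu> - l)))" for l
    define g where "g l = ennreal (sqrt (h (\<mu> - l))) * V l" for l
    have [measurable]: "f \<in> borel_measurable lborel" "g \<in> borel_measurable lborel"
      unfolding f_def g_def by measurable
    have fg: "f l * g l = ennreal (h (\<mu> - l)) * V l" for l
    proof -
      have "f l * g l = (ennreal (sqrt (h (\<mu> - l))) * ennreal (sqrt (h (\<mu> - l)))) * V l"
        unfolding f_def g_def by (simp only: mult.assoc)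
      also have "ennreal (sqrt (h (\<mu> - l))) * ennreal (sqrt (h (\<mu> - l))) = ennreal (h (\<mu> - l))"
        using hpos[of "\<mu> - l"] by (simp flip: ennreal_mult)
      finally show ?thesis .
    qed
    have f2: "f l ^ 2 = ennreal (h (\<mu> - l))" for l
      unfolding f_def using hpos[of "\<mu> - l"] by (simp add: ennreal_power)
    have g2: "g l ^ 2 = ennreal (h (\<mu> - l)) * (V l)\<^sup>2" for l
      unfolding g_def using hpos[of "\<mu> - l"] by (simp add: ennreal_power power_mult_distrib)
    have "(\<integral>\<^sup>+l. f l * g l \<partial>lborel)\<^sup>2 \<le> (\<integral>\<^sup>+l. f l ^ 2 \<partial>lborel) * (\<integral>\<^sup>+l. g l ^ 2 \<partial>lborel)"
      by (rule Cauchy_Schwarz_nn_integral) auto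
    moreover have "(\<integral>\<^sup>+l. f l ^ 2 \<partial>lborel) = H"
      unfolding f2 H_def by (rule nn_shift_rev[where f="\<lambda>x. ennreal (h x)"]) measurable
    ultimately show ?thesis by (simp add: fg g2)
  qed
  have "(\<integral>\<^sup>+\<mu>. (\<integral>\<^sup>+l. ennreal (h (\<mu> - l)) * V l \<partial>lborel)\<^sup>2 \<partial>lborel)
      \<le> (\<integral>\<^sup>+\<mu>. H * (\<integral>\<^sup>+l. ennreal (h (\<mu> - l)) * (V l)\<^sup>2 \<partial>lborel) \<partial>lborel)"
    by (intro nn_integral_mono pt)
  also have "\<dots> = H * (\<integral>\<^sup>+\<mu>. (\<integral>\<^sup>+l. ennreal (h (\<mu> - l)) * (V l)\<^sup>2 \<partial>lborel) \<partial>lborel)"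
    by (rule nn_integral_cmult) measurable
  also have "(\<integral>\<^sup>+\<mu>. (\<integral>\<^sup>+l. ennreal (h (\<mu> - l)) * (V l)\<^sup>2 \<partial>lborel) \<partial>lborel)
      = (\<integral>\<^sup>+l. (\<integral>\<^sup>+\<mu>. ennreal (h (\<mu> - l)) * (V l)\<^sup>2 \<partial>lborel) \<partial>lborel)"
    by (rule lborel_pair.Fubini'[symmetric]) measurable
  also have "\<dots> = (\<integral>\<^sup>+l. H * (V l)\<^sup>2 \<partial>lborel)"
  proof (intro nn_integral_cong)
    fix l
    have "(\<integral>\<^sup>+\<mu>. ennreal (h (\<mu> - l)) * (V l)\<^sup>2 \<partial>lborel) = (\<integral>\<^sup>+\<mu>. ennreal (h (\<mu> - l)) \<partial>lborel) * (V l)\<^sup>2"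
      by (rule nn_integral_multc) measurable
    also have "(\<integral>\<^sup>+\<mu>. ennreal (h (\<mu> - l)) \<partial>lborel) = H"
      unfolding H_def by (rule nn_shift[where f="\<lambda>x. ennreal (h x)"]) measurable
    finally show "(\<integral>\<^sup>+\<mu>. ennreal (h (\<mu> - l)) * (V l)\<^sup>2 \<partial>lborel) = H * (V l)\<^sup>2" .
  qed
  also have "\<dots> = H * (\<integral>\<^sup>+l. (V l)\<^sup>2 \<partial>lborel)"
    by (rule nn_integral_cmult) measurable
  finally show ?thesis by (simp add: H_def power2_eq_square mult.assoc)
qed

lemma k_bound:
  fixes t lam a :: real
  shows "norm ((exp (\<i> * complex_of_real (t*lam)) - exp (\<i> * complex_of_real (t*a))) / (\<i> * complex_of_real (lam - a)))
     \<le> (2*\<bar>t\<bar>+4) / (1 + \<bar>lam - a\<bar>)"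
proof (cases "lam = a")
  case True then show ?thesis by simp
next
  case False
  define s where "s = lam - a"
  have s: "s \<noteq> 0" using False by (simp add: s_def)
  have "exp (\<i> * complex_of_real (t*lam)) = exp (\<i> * complex_of_real (t*a)) * exp (\<i> * complex_of_real (t * s))"
  proof -
    have "\<i> * complex_of_real (t*lam) = \<i> * complex_of_real (t*a) + \<i> * complex_of_real (t * s)"
      by (simp add: s_def algebra_simps)
    then show ?thesis by (simp only: exp_add)
  qed
  then have ee: "exp (\<i> * complex_of_real (t*lam)) - exp (\<i> * complex_of_real (t*a)) = exp (\<i> * complex_of_real (t*a)) * (exp (\<i> * complex_of_real (t * s)) - 1)"
    by (simp add: algebra_simps)
  have eq: "norm ((exp (\<i> * complex_of_real (t*lam)) - exp (\<i> * complex_of_real (t*a))) / (\<i> * complex_of_real (lam - a)))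
      = norm (exp (\<i> * complex_of_real (t * s)) - 1) / \<bar>s\<bar>"
    by (simp only: ee norm_divide norm_mult) (simp add: s_def del: of_real_diff)
  have p: "0 < 1 + \<bar>s\<bar>" by simp
  show ?thesis
  proof (cases "\<bar>s\<bar> \<le> 1")
    case True
    have "norm (exp (\<i> * complex_of_real (t * s)) - 1) / \<bar>s\<bar> \<le> \<bar>s\<bar> * \<bar>t\<bar> / \<bar>s\<bar>"
      by (intro divide_right_mono exp_i_diff_le) auto
    also have "\<dots> = \<bar>t\<bar>" using s by simp
    also have "\<dots> \<le> (2*\<bar>t\<bar>+4) / (1 + \<bar>s\<bar>)"
    proof -
      have "\<bar>t\<bar> * (1 + \<bar>s\<bar>) \<le> \<bar>t\<bar> * 2" using True by (intro mult_left_mono) auto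
      then have "\<bar>t\<bar> * (1 + \<bar>s\<bar>) \<le> 2*\<bar>t\<bar>+4" by linarith
      then show ?thesis using p by (simp add: le_divide_eq)
    qed
    finally show ?thesis unfolding eq s_def .
  next
    case False
    have "norm (exp (\<i> * complex_of_real (t * s)) - 1) \<le> norm (exp (\<i> * complex_of_real (t * s))) + norm (1::complex)"
      by (rule norm_triangle_ineq4)
    then have "norm (exp (\<i> * complex_of_real (t * s)) - 1) \<le> 2" by simp
    then have "norm (exp (\<i> * complex_of_real (t * s)) - 1) / \<bar>s\<bar> \<le> 2 / \<bar>s\<bar>"
      by (intro divide_right_mono) auto
    also have "\<dots> \<le> 4 / (1 + \<bar>s\<bar>)"
    proof -
      have "2*(1+\<bar>s\<bar>) \<le> 4*\<bar>s\<bar>" using False by simp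
      then have "2 \<le> 4*\<bar>s\<bar>/(1+\<bar>s\<bar>)" using p by (simp add: le_divide_eq)
      then have "2 \<le> 4/(1+\<bar>s\<bar>) * \<bar>s\<bar>" by simp
      then show ?thesis using s by (simp add: divide_le_eq)
    qed
    also have "\<dots> \<le> (2*\<bar>t\<bar>+4) / (1 + \<bar>s\<bar>)" by (intro divide_right_mono) auto
    finally show ?thesis unfolding eq s_def .
  qed
qed

lemma theta_cont:
  assumes "C0_infty \<theta>"
  shows "continuous_on UNIV \<theta>" and "\<exists>R\<ge>0. \<forall>t. R < \<bar>t\<bar> \<longrightarrow> \<theta> t = 0"
proof -
  obtain R B0 B1 B2 where R: "R \<ge> 0"
    and d0: "\<And>t. (\<theta> has_real_derivative deriv \<theta> t) (at t)"
    and z0: "\<And>t. R < \<bar>t\<bar> \<Longrightarrow> \<theta> t = 0"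
    using theta_props[OF assms] by metis
  show "continuous_on UNIV \<theta>"
    by (rule continuous_on_vector_derivative)
       (use d0 in \<open>auto simp: has_real_derivative_iff_has_vector_derivative[symmetric] intro: has_field_derivative_at_within\<close>)
  show "\<exists>R\<ge>0. \<forall>t. R < \<bar>t\<bar> \<longrightarrow> \<theta> t = 0" using R z0 by blast
qed

lemma gg_meas[measurable]: "gg \<in> borel_measurable borel"
  unfolding gg_def by measurable

lemma pointwise:
  fixes \<theta> :: "real \<Rightarrow> real" and wh :: "real \<Rightarrow> real \<Rightarrow> complex"
  assumes C0: "C0_infty \<theta>" and K: "K \<ge> 0"
    and Kb: "\<And>\<mu> lam a. norm (LINT t|lborel. exp (- \<i> * complex_of_real (t*\<mu>)) * complex_of_real (\<theta> t) *
     ((exp (\<i> * complex_of_real (t*lam)) - exp (\<i> * complex_of_real (t*a))) / (\<i> * complex_of_real (lam - a))))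
     \<le> K * (gg (\<mu> - lam) + gg (\<mu> - a)) / (1 + \<bar>lam - a\<bar>)"
    and wm[measurable]: "wh \<xi> \<in> borel_measurable borel"
    and N: "(\<integral>\<^sup>+lam. ennreal (cmod (wh \<xi> lam) / (1 + \<bar>lam - \<xi>^3\<bar>)) \<partial>lborel) < \<infinity>"
  shows "ennreal (cmod (cutoff_duhamel_hat \<theta> wh \<xi> \<mu>)) \<le> ennreal (K / (2*pi)) *
     ((\<integral>\<^sup>+lam. ennreal (gg (\<mu> - lam) * (cmod (wh \<xi> lam) / (1 + \<bar>lam - \<xi>^3\<bar>))) \<partial>lborel)
      + ennreal (gg (\<mu> - \<xi>^3)) * (\<integral>\<^sup>+lam. ennreal (cmod (wh \<xi> lam) / (1 + \<bar>lam - \<xi>^3\<bar>)) \<partial>lborel))"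
proof -
  define a where "a = \<xi>^3"
  define w where "w = wh \<xi>"
  have [measurable]: "w \<in> borel_measurable borel" unfolding w_def by (rule wm)
  have thc: "continuous_on UNIV \<theta>" using theta_cont[OF C0] by auto
  obtain R where R: "R \<ge> 0" "\<And>t. R < \<bar>t\<bar> \<Longrightarrow> \<theta> t = 0" using theta_cont(2)[OF C0] by blast
  have [measurable]: "\<theta> \<in> borel_measurable borel" by (rule borel_measurable_continuous_onI[OF thc])
  define k where "k t lam = (exp (\<i> * complex_of_real (t*lam)) - exp (\<i> * complex_of_real (t*a))) / (\<i> * complex_of_real (lam - a))" for t lam
  define e where "e t = exp (- \<i> * complex_of_real (t*\<mu>)) * complex_of_real (\<theta> t)" for t
  define F where "F t lam = e t * (k t lam * w lam)" for t lam
  have [measurable]: "case_prod F \<in> borel_measurable (lborel \<Otimes>\<^sub>M lborel)"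
    unfolding F_def e_def k_def by measurable
  define NN where "NN = (\<integral>\<^sup>+lam. ennreal (cmod (w lam) / (1 + \<bar>lam - a\<bar>)) \<partial>lborel)"
  have NN: "NN < \<infinity>" using N by (simp add: NN_def w_def a_def)
  define T where "T t = \<bar>\<theta> t\<bar> * (2*\<bar>t\<bar>+4)" for t
  have Tfin: "(\<integral>\<^sup>+t. ennreal (T t) \<partial>lborel) < \<infinity>"
  proof -
    have "integrable lborel (\<lambda>t. complex_of_real (T t))"
      by (rule integrable_cont_supp[where R=R]) (use R(2) in \<open>auto simp: T_def intro!: continuous_intros continuous_on_compose2[OF thc]\<close>)
    then have "(\<integral>\<^sup>+t. ennreal (norm (complex_of_real (T t))) \<partial>lborel) < \<infinity>"
      by (simp add: integrable_iff_bounded)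
    moreover have "norm (complex_of_real (T t)) = T t" for t
      unfolding norm_of_real by (rule abs_of_nonneg) (simp add: T_def)
    ultimately show ?thesis by simp
  qed
  have Fint: "integrable (lborel \<Otimes>\<^sub>M lborel) (case_prod F)"
  proof (rule integrableI_bounded)
    show "case_prod F \<in> borel_measurable (lborel \<Otimes>\<^sub>M lborel)" by measurable
    have "(\<integral>\<^sup>+p. ennreal (norm (case_prod F p)) \<partial>(lborel \<Otimes>\<^sub>M lborel))
        = (\<integral>\<^sup>+t. \<integral>\<^sup>+lam. ennreal (norm (F t lam)) \<partial>lborel \<partial>lborel)"
    proof -
      have m: "(\<lambda>p. ennreal (norm (case_prod F p))) \<in> borel_measurable (lborel \<Otimes>\<^sub>M lborel)" by measurable
      from lborel.nn_integral_fst[OF m] show ?thesis by simp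
    qed
    also have "\<dots> \<le> (\<integral>\<^sup>+t. \<integral>\<^sup>+lam. ennreal (T t) * ennreal (cmod (w lam) / (1 + \<bar>lam - a\<bar>)) \<partial>lborel \<partial>lborel)"
    proof (intro nn_integral_mono)
      fix t lam
      have "norm (F t lam) = \<bar>\<theta> t\<bar> * (norm (k t lam) * cmod (w lam))"
        by (simp add: F_def e_def norm_mult)
      also have "\<dots> \<le> \<bar>\<theta> t\<bar> * ((2*\<bar>t\<bar>+4) / (1 + \<bar>lam - a\<bar>) * cmod (w lam))"
        unfolding k_def by (intro mult_left_mono mult_right_mono k_bound) auto
      also have "\<dots> = T t * (cmod (w lam) / (1 + \<bar>lam - a\<bar>))" by (simp add: T_def)
      finally show "ennreal (norm (F t lam)) \<le> ennreal (T t) * ennreal (cmod (w lam) / (1 + \<bar>lam - a\<bar>))"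
        by (simp add: ennreal_mult[symmetric] T_def ennreal_leI)
    qed
    also have "\<dots> = (\<integral>\<^sup>+t. ennreal (T t) * NN \<partial>lborel)"
      unfolding NN_def by (intro nn_integral_cong nn_integral_cmult) measurable
    also have "\<dots> = (\<integral>\<^sup>+t. ennreal (T t) \<partial>lborel) * NN"
      by (rule nn_integral_multc) (measurable, simp add: T_def)
    also have "\<dots> < \<infinity>" using Tfin NN by (simp add: ennreal_mult_less_top)
    finally show "(\<integral>\<^sup>+p. ennreal (norm (case_prod F p)) \<partial>(lborel \<Otimes>\<^sub>M lborel)) < \<infinity>" .
  qed
  have "cutoff_duhamel_hat \<theta> wh \<xi> \<mu> = (LINT t|lborel. e t * (LINT lam|lborel. k t lam * w lam)) / complex_of_real (2*pi)"
    unfolding cutoff_duhamel_hat_def duhamel_x_hat_def e_def k_def w_def a_def by (simp add: mult.assoc)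
  also have "(LINT t|lborel. e t * (LINT lam|lborel. k t lam * w lam)) = (LINT t|lborel. LINT lam|lborel. F t lam)"
    unfolding F_def by (simp add: integral_mult_right_zero)
  also have "\<dots> = (LINT lam|lborel. LINT t|lborel. F t lam)"
    by (rule lborel_pair.Fubini_integral[OF Fint, symmetric])
  also have "\<dots> = (LINT lam|lborel. (LINT t|lborel. e t * k t lam) * w lam)"
    unfolding F_def by (simp add: integral_mult_left_zero[symmetric] mult.assoc)
  finally have ceq: "cutoff_duhamel_hat \<theta> wh \<xi> \<mu> = (LINT lam|lborel. (LINT t|lborel. e t * k t lam) * w lam) / complex_of_real (2*pi)" .
  have "ennreal (norm (LINT lam|lborel. (LINT t|lborel. e t * k t lam) * w lam))
     \<le> (\<integral>\<^sup>+lam. ennreal (norm ((LINT t|lborel. e t * k t lam) * w lam)) \<partial>lborel)"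
    by (rule norm_integral_nn)
  also have "\<dots> \<le> (\<integral>\<^sup>+lam. ennreal K * (ennreal (gg (\<mu> - lam) * (cmod (w lam) / (1 + \<bar>lam - a\<bar>))) + ennreal (gg (\<mu> - a)) * ennreal (cmod (w lam) / (1 + \<bar>lam - a\<bar>))) \<partial>lborel)"
  proof (intro nn_integral_mono)
    fix lam
    have "norm ((LINT t|lborel. e t * k t lam) * w lam) \<le> K * (gg (\<mu> - lam) + gg (\<mu> - a)) / (1 + \<bar>lam - a\<bar>) * cmod (w lam)"
    proof -
      have "norm (LINT t|lborel. e t * k t lam) \<le> K * (gg (\<mu> - lam) + gg (\<mu> - a)) / (1 + \<bar>lam - a\<bar>)"
        unfolding e_def k_def by (rule Kb)
      then show ?thesis unfolding norm_mult by (rule mult_right_mono[OF _ norm_ge_zero])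
    qed
    also have "\<dots> = K * (gg (\<mu> - lam) * (cmod (w lam) / (1 + \<bar>lam - a\<bar>)) + gg (\<mu> - a) * (cmod (w lam) / (1 + \<bar>lam - a\<bar>)))"
      by (simp add: algebra_simps add_divide_distrib)
    finally show "ennreal (norm ((LINT t|lborel. e t * k t lam) * w lam)) \<le> ennreal K * (ennreal (gg (\<mu> - lam) * (cmod (w lam) / (1 + \<bar>lam - a\<bar>))) + ennreal (gg (\<mu> - a)) * ennreal (cmod (w lam) / (1 + \<bar>lam - a\<bar>)))"
      using K gg_pos[of "\<mu> - lam"] gg_pos[of "\<mu> - a"]
      by (simp add: ennreal_mult[symmetric] ennreal_plus[symmetric] ennreal_leI less_imp_le del: ennreal_plus)
  qed
  also have "\<dots> = ennreal K * ((\<integral>\<^sup>+lam. ennreal (gg (\<mu> - lam) * (cmod (w lam) / (1 + \<bar>lam - a\<bar>))) \<partial>lborel) + ennreal (gg (\<mu> - a)) * NN)"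
  proof -
    have m1[measurable]: "(\<lambda>lam. ennreal (gg (\<mu> - lam) * (cmod (w lam) / (1 + \<bar>lam - a\<bar>)))) \<in> borel_measurable lborel" by measurable
    have m3[measurable]: "(\<lambda>lam. ennreal (cmod (w lam) / (1 + \<bar>lam - a\<bar>))) \<in> borel_measurable lborel" by measurable
    show ?thesis unfolding NN_def
      by (simp only: nn_integral_cmult[of _ lborel] nn_integral_add m1 m3 borel_measurable_times_ennreal borel_measurable_const borel_measurable_add)
  qed
  finally have main: "ennreal (norm (LINT lam|lborel. (LINT t|lborel. e t * k t lam) * w lam)) \<le> ennreal K * ((\<integral>\<^sup>+lam. ennreal (gg (\<mu> - lam) * (cmod (w lam) / (1 + \<bar>lam - a\<bar>))) \<partial>lborel) + ennreal (gg (\<mu> - a)) * NN)" .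
  have "ennreal (cmod (cutoff_duhamel_hat \<theta> wh \<xi> \<mu>)) = ennreal (1/(2*pi)) * ennreal (norm (LINT lam|lborel. (LINT t|lborel. e t * k t lam) * w lam))"
    unfolding ceq by (simp add: norm_divide ennreal_mult[symmetric])
  also have "\<dots> \<le> ennreal (1/(2*pi)) * (ennreal K * ((\<integral>\<^sup>+lam. ennreal (gg (\<mu> - lam) * (cmod (w lam) / (1 + \<bar>lam - a\<bar>))) \<partial>lborel) + ennreal (gg (\<mu> - a)) * NN))"
    by (intro mult_left_mono main) auto
  also have "\<dots> = ennreal (K / (2*pi)) * ((\<integral>\<^sup>+lam. ennreal (gg (\<mu> - lam) * (cmod (w lam) / (1 + \<bar>lam - a\<bar>))) \<partial>lborel) + ennreal (gg (\<mu> - a)) * NN)"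
    using K by (simp add: ennreal_mult[symmetric] mult.assoc[symmetric])
  finally show ?thesis by (simp add: NN_def w_def a_def)
qed

lemma sq_le: "((x::ennreal) + y)\<^sup>2 \<le> 2 * x\<^sup>2 + 2 * y\<^sup>2"
proof -
  have "(x + y)\<^sup>2 = x\<^sup>2 + 2 * x * y + y\<^sup>2" by (simp add: power2_sum)
  also have "\<dots> \<le> x\<^sup>2 + (x\<^sup>2 + y\<^sup>2) + y\<^sup>2" by (intro add_mono order_refl sum_of_squares_ge_ennreal)
  also have "\<dots> = 2 * x\<^sup>2 + 2 * y\<^sup>2" by (simp add: mult_2 algebra_simps)
  finally show ?thesis .
qed

definition hp :: "real \<Rightarrow> real \<Rightarrow> real" where "hp p x = (1 + \<bar>x\<bar>) powr p * gg x"

lemma hp_meas[measurable]: "hp p \<in> borel_measurable borel"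
  unfolding hp_def by measurable

lemma hp_nonneg: "hp p x \<ge> 0" unfolding hp_def using gg_pos[of x] by simp

lemma ennreal_le_2mult: "a \<le> 2 * b \<Longrightarrow> 0 \<le> b \<Longrightarrow> ennreal a \<le> 2 * ennreal b"
proof -
  assume "a \<le> 2 * b" "0 \<le> b"
  have "ennreal a \<le> ennreal (2 * b)" using \<open>a \<le> 2 * b\<close> by (rule ennreal_leI)
  also have "ennreal (2 * b) = 2 * ennreal b" using \<open>0 \<le> b\<close> by (simp add: ennreal_mult)
  finally show ?thesis .
qed

lemma hp_bound: "hp p x \<le> 2 * (1 + \<bar>x\<bar>) powr (p - 2)"
proof -
  have sq: "(1 + \<bar>x\<bar>)\<^sup>2 \<le> 2 * (1 + x\<^sup>2)"
  proof -
    have "0 \<le> (\<bar>x\<bar> - 1)\<^sup>2" by simp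
    then show ?thesis by (simp add: power2_eq_square algebra_simps)
  qed
  have pos: "0 < (1 + \<bar>x\<bar>)\<^sup>2" by simp
  have pos1: "(0::real) < 1 + x\<^sup>2" by (rule add_pos_nonneg) auto
  have "gg x = 2 / (2 * (1 + x\<^sup>2))" unfolding gg_def using pos1 by (simp add: field_simps)
  also have "\<dots> \<le> 2 / (1 + \<bar>x\<bar>)\<^sup>2"
    by (rule divide_left_mono[OF sq]) (use pos in \<open>auto intro!: mult_pos_pos add_pos_nonneg\<close>)
  finally have "gg x \<le> 2 / (1 + \<bar>x\<bar>)\<^sup>2" .
  then have "hp p x \<le> (1 + \<bar>x\<bar>) powr p * (2 / (1 + \<bar>x\<bar>)\<^sup>2)"
    unfolding hp_def by (intro mult_left_mono) auto
  also have "\<dots> = 2 * (1 + \<bar>x\<bar>) powr (p - 2)"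
  proof -
    have "(1 + \<bar>x\<bar>) powr (p - 2) = (1 + \<bar>x\<bar>) powr p / (1 + \<bar>x\<bar>) powr 2" by (rule powr_diff)
    also have "(1 + \<bar>x\<bar>) powr 2 = (1 + \<bar>x\<bar>)\<^sup>2" by (rule powr_numeral) simp
    finally show ?thesis by simp
  qed
  finally show ?thesis .
qed

lemma hp_le2: "p \<le> 2 \<Longrightarrow> hp p x \<le> 2"
proof -
  assume "p \<le> 2"
  then have "(1 + \<bar>x\<bar>) powr (p - 2) \<le> (1 + \<bar>x\<bar>) powr 0" by (intro powr_mono) auto
  moreover have "(0::real) < 1 + \<bar>x\<bar>" by (rule add_pos_nonneg) auto
  ultimately have "(1 + \<bar>x\<bar>) powr (p - 2) \<le> 1" by simp
  then show ?thesis using hp_bound[of p x] by linarith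
qed

lemma hp_fin: assumes "p < 1" shows "(\<integral>\<^sup>+x. ennreal (hp p x) \<partial>lborel) < \<infinity>"
proof -
  have "(\<integral>\<^sup>+x. ennreal (hp p x) \<partial>lborel) \<le> (\<integral>\<^sup>+x. 2 * ennreal ((1 + \<bar>x\<bar>) powr (p - 2)) \<partial>lborel)"
    by (intro nn_integral_mono ennreal_le_2mult hp_bound) simp
  also have "\<dots> = 2 * (\<integral>\<^sup>+x. ennreal ((1 + \<bar>x\<bar>) powr (p - 2)) \<partial>lborel)"
    by (rule nn_integral_cmult) measurable
  also have "\<dots> < \<infinity>" using fin_pow[of "p - 2"] assms by (simp add: ennreal_mult_less_top)
  finally show ?thesis .
qed

lemma hp2_fin: assumes "p < 1" shows "(\<integral>\<^sup>+x. ennreal ((hp p x)\<^sup>2) \<partial>lborel) < \<infinity>"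
proof -
  have "(\<integral>\<^sup>+x. ennreal ((hp p x)\<^sup>2) \<partial>lborel) \<le> (\<integral>\<^sup>+x. 2 * ennreal (hp p x) \<partial>lborel)"
  proof (intro nn_integral_mono)
    fix x
    have "(hp p x)\<^sup>2 \<le> 2 * hp p x"
      using mult_right_mono[OF hp_le2[of p x] hp_nonneg[of p x]] assms by (simp add: power2_eq_square)
    then show "ennreal ((hp p x)\<^sup>2) \<le> 2 * ennreal (hp p x)"
      using hp_nonneg[of p x] by (rule ennreal_le_2mult)
  qed
  also have "\<dots> = 2 * (\<integral>\<^sup>+x. ennreal (hp p x) \<partial>lborel)"
    by (rule nn_integral_cmult) measurable
  also have "\<dots> < \<infinity>" using hp_fin[OF assms] by (simp add: ennreal_mult_less_top)
  finally show ?thesis .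
qed

lemma abs_bound:
  fixes \<omega> Fc h V :: "real \<Rightarrow> real" and c d a :: real and NN :: ennreal
  assumes hm[measurable]: "h \<in> borel_measurable borel" and Vm[measurable]: "V \<in> borel_measurable borel"
    and h0: "\<And>x. h x \<ge> 0" and V0: "\<And>x. V x \<ge> 0" and c: "c \<ge> 0" and d: "d \<ge> 0"
    and w0: "\<And>\<mu>. \<omega> \<mu> * Fc \<mu> \<ge> 0"
    and hyp: "\<And>\<mu>. ennreal (\<omega> \<mu> * Fc \<mu>) \<le> ennreal c * ((\<integral>\<^sup>+l. ennreal (h (\<mu> - l) * V l) \<partial>lborel) + ennreal (d * h (\<mu> - a)) * NN)"
  shows "(\<integral>\<^sup>+\<mu>. ennreal ((\<omega> \<mu> * Fc \<mu>)\<^sup>2) \<partial>lborel)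
    \<le> ennreal (2*c\<^sup>2) * ((\<integral>\<^sup>+x. ennreal (h x) \<partial>lborel)\<^sup>2 * (\<integral>\<^sup>+l. ennreal ((V l)\<^sup>2) \<partial>lborel))
      + ennreal (2*c\<^sup>2*d\<^sup>2) * ((\<integral>\<^sup>+x. ennreal ((h x)\<^sup>2) \<partial>lborel) * NN\<^sup>2)"
proof -
  define Q where "Q \<mu> = (\<integral>\<^sup>+l. ennreal (h (\<mu> - l)) * ennreal (V l) \<partial>lborel)" for \<mu>
  have Qm[measurable]: "Q \<in> borel_measurable lborel" unfolding Q_def by measurable
  have Qeq: "(\<integral>\<^sup>+l. ennreal (h (\<mu> - l) * V l) \<partial>lborel) = Q \<mu>" for \<mu>
    unfolding Q_def using h0 V0 by (intro nn_integral_cong) (simp add: ennreal_mult)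
  have pt: "ennreal ((\<omega> \<mu> * Fc \<mu>)\<^sup>2) \<le> ennreal (2*c\<^sup>2) * (Q \<mu>)\<^sup>2 + ennreal (2*c\<^sup>2*d\<^sup>2) * (ennreal ((h (\<mu> - a))\<^sup>2) * NN\<^sup>2)" for \<mu>
  proof -
    define X where "X = ennreal (d * h (\<mu> - a)) * NN"
    have "ennreal ((\<omega> \<mu> * Fc \<mu>)\<^sup>2) = (ennreal (\<omega> \<mu> * Fc \<mu>))\<^sup>2"
      using w0[of \<mu>] by (simp add: ennreal_power)
    also have "\<dots> \<le> (ennreal c * (Q \<mu> + X))\<^sup>2"
      using hyp[of \<mu>] unfolding Qeq X_def by (intro power_mono) auto
    also have "\<dots> = ennreal c ^ 2 * (Q \<mu> + X)\<^sup>2" by (simp add: power_mult_distrib)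
    also have "\<dots> \<le> ennreal c ^ 2 * (2 * (Q \<mu>)\<^sup>2 + 2 * X\<^sup>2)" by (intro mult_left_mono sq_le) auto
    also have "\<dots> = ennreal (2*c\<^sup>2) * (Q \<mu>)\<^sup>2 + ennreal (2*c\<^sup>2*d\<^sup>2) * (ennreal ((h (\<mu> - a))\<^sup>2) * NN\<^sup>2)"
    proof -
      have e1: "ennreal c ^ 2 * 2 = ennreal (2*c\<^sup>2)" using c by (simp add: ennreal_power ennreal_mult mult.commute)
      have e2: "X\<^sup>2 = ennreal (d\<^sup>2) * (ennreal ((h (\<mu> - a))\<^sup>2) * NN\<^sup>2)"
        unfolding X_def using d h0[of "\<mu> - a"]
        by (simp add: power_mult_distrib ennreal_power[symmetric] ennreal_mult[symmetric] mult.assoc) (simp add: ennreal_mult power_mult_distrib mult.assoc)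
      have e3: "ennreal (2*c\<^sup>2*d\<^sup>2) = ennreal (2*c\<^sup>2) * ennreal (d\<^sup>2)" using c d by (simp add: ennreal_mult)
      show ?thesis unfolding e2 e3 e1[symmetric] by (simp add: algebra_simps)
    qed
    finally show ?thesis .
  qed
  have "(\<integral>\<^sup>+\<mu>. ennreal ((\<omega> \<mu> * Fc \<mu>)\<^sup>2) \<partial>lborel)
     \<le> (\<integral>\<^sup>+\<mu>. ennreal (2*c\<^sup>2) * (Q \<mu>)\<^sup>2 + ennreal (2*c\<^sup>2*d\<^sup>2) * (ennreal ((h (\<mu> - a))\<^sup>2) * NN\<^sup>2) \<partial>lborel)"
    by (intro nn_integral_mono pt)
  also have "\<dots> = ennreal (2*c\<^sup>2) * (\<integral>\<^sup>+\<mu>. (Q \<mu>)\<^sup>2 \<partial>lborel) + ennreal (2*c\<^sup>2*d\<^sup>2) * ((\<integral>\<^sup>+\<mu>. ennreal ((h (\<mu> - a))\<^sup>2) \<partial>lborel) * NN\<^sup>2)"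
  proof -
    have m1[measurable]: "(\<lambda>\<mu>. (Q \<mu>)\<^sup>2) \<in> borel_measurable lborel" by measurable
    have m2[measurable]: "(\<lambda>\<mu>. ennreal ((h (\<mu> - a))\<^sup>2)) \<in> borel_measurable lborel" by measurable
    have m3: "(\<lambda>\<mu>. ennreal (2*c\<^sup>2) * (Q \<mu>)\<^sup>2) \<in> borel_measurable lborel"
      using m1 by (rule borel_measurable_times_ennreal[OF borel_measurable_const])
    have m4: "(\<lambda>\<mu>. ennreal ((h (\<mu> - a))\<^sup>2) * NN\<^sup>2) \<in> borel_measurable lborel"
      using m2 by (rule borel_measurable_times_ennreal[OF _ borel_measurable_const])
    have m5: "(\<lambda>\<mu>. ennreal (2*c\<^sup>2*d\<^sup>2) * (ennreal ((h (\<mu> - a))\<^sup>2) * NN\<^sup>2)) \<in> borel_measurable lborel"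
      using m4 by (rule borel_measurable_times_ennreal[OF borel_measurable_const])
    have "(\<integral>\<^sup>+\<mu>. ennreal (2*c\<^sup>2) * (Q \<mu>)\<^sup>2 + ennreal (2*c\<^sup>2*d\<^sup>2) * (ennreal ((h (\<mu> - a))\<^sup>2) * NN\<^sup>2) \<partial>lborel)
       = (\<integral>\<^sup>+\<mu>. ennreal (2*c\<^sup>2) * (Q \<mu>)\<^sup>2 \<partial>lborel) + (\<integral>\<^sup>+\<mu>. ennreal (2*c\<^sup>2*d\<^sup>2) * (ennreal ((h (\<mu> - a))\<^sup>2) * NN\<^sup>2) \<partial>lborel)"
      by (rule nn_integral_add[OF m3 m5])
    also have "(\<integral>\<^sup>+\<mu>. ennreal (2*c\<^sup>2) * (Q \<mu>)\<^sup>2 \<partial>lborel) = ennreal (2*c\<^sup>2) * (\<integral>\<^sup>+\<mu>. (Q \<mu>)\<^sup>2 \<partial>lborel)"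
      by (rule nn_integral_cmult[OF m1])
    also have "(\<integral>\<^sup>+\<mu>. ennreal (2*c\<^sup>2*d\<^sup>2) * (ennreal ((h (\<mu> - a))\<^sup>2) * NN\<^sup>2) \<partial>lborel)
       = ennreal (2*c\<^sup>2*d\<^sup>2) * (\<integral>\<^sup>+\<mu>. ennreal ((h (\<mu> - a))\<^sup>2) * NN\<^sup>2 \<partial>lborel)"
      by (rule nn_integral_cmult[OF m4])
    also have "(\<integral>\<^sup>+\<mu>. ennreal ((h (\<mu> - a))\<^sup>2) * NN\<^sup>2 \<partial>lborel) = (\<integral>\<^sup>+\<mu>. ennreal ((h (\<mu> - a))\<^sup>2) \<partial>lborel) * NN\<^sup>2"
      by (rule nn_integral_multc[OF m2])
    finally show ?thesis .
  qed
  also have "\<dots> \<le> ennreal (2*c\<^sup>2) * ((\<integral>\<^sup>+x. ennreal (h x) \<partial>lborel)\<^sup>2 * (\<integral>\<^sup>+l. ennreal ((V l)\<^sup>2) \<partial>lborel))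
      + ennreal (2*c\<^sup>2*d\<^sup>2) * ((\<integral>\<^sup>+x. ennreal ((h x)\<^sup>2) \<partial>lborel) * NN\<^sup>2)"
  proof -
    have "(\<integral>\<^sup>+\<mu>. (Q \<mu>)\<^sup>2 \<partial>lborel) \<le> (\<integral>\<^sup>+x. ennreal (h x) \<partial>lborel)\<^sup>2 * (\<integral>\<^sup>+l. (ennreal (V l))\<^sup>2 \<partial>lborel)"
      unfolding Q_def by (rule young[OF hm _ h0]) measurable
    also have "(\<integral>\<^sup>+l. (ennreal (V l))\<^sup>2 \<partial>lborel) = (\<integral>\<^sup>+l. ennreal ((V l)\<^sup>2) \<partial>lborel)"
      using V0 by (intro nn_integral_cong) (simp add: ennreal_power)
    finally have y: "(\<integral>\<^sup>+\<mu>. (Q \<mu>)\<^sup>2 \<partial>lborel) \<le> (\<integral>\<^sup>+x. ennreal (h x) \<partial>lborel)\<^sup>2 * (\<integral>\<^sup>+l. ennreal ((V l)\<^sup>2) \<partial>lborel)" .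
    have sh: "(\<integral>\<^sup>+\<mu>. ennreal ((h (\<mu> - a))\<^sup>2) \<partial>lborel) = (\<integral>\<^sup>+x. ennreal ((h x)\<^sup>2) \<partial>lborel)"
      by (rule nn_shift[where f="\<lambda>x. ennreal ((h x)\<^sup>2)"]) measurable
    show ?thesis unfolding sh by (intro add_mono mult_left_mono y order_refl) simp
  qed
  finally show ?thesis .
qed

lemma hyp_helper:
  fixes Fc f k :: "real \<Rightarrow> real" and \<omega> c g0 d hv :: real and NN :: ennreal
  assumes hF: "ennreal Fc0 \<le> ennreal c * ((\<integral>\<^sup>+l. ennreal (f l) \<partial>lborel) + ennreal g0 * NN)"
    and w: "\<omega> \<ge> 0" and c: "c \<ge> 0" and f0: "\<And>l. f l \<ge> 0" and fm[measurable]: "f \<in> borel_measurable borel"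
    and fk: "\<And>l. \<omega> * f l \<le> k l" and g0: "g0 \<ge> 0" and gd: "\<omega> * g0 \<le> d * hv"
  shows "ennreal (\<omega> * Fc0) \<le> ennreal c * ((\<integral>\<^sup>+l. ennreal (k l) \<partial>lborel) + ennreal (d * hv) * NN)"
proof -
  have "ennreal (\<omega> * Fc0) \<le> ennreal \<omega> * ennreal Fc0"
    using w by (cases "Fc0 \<ge> 0") (auto simp: ennreal_mult ennreal_neg mult_nonneg_nonpos)
  also have "\<dots> \<le> ennreal \<omega> * (ennreal c * ((\<integral>\<^sup>+l. ennreal (f l) \<partial>lborel) + ennreal g0 * NN))"
    using mult_left_mono[OF hF, of "ennreal \<omega>"] by simp
  also have "\<dots> = ennreal c * (ennreal \<omega> * (\<integral>\<^sup>+l. ennreal (f l) \<partial>lborel) + ennreal (\<omega> * g0) * NN)"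
    using w g0 by (simp add: ennreal_mult algebra_simps)
  also have "\<dots> \<le> ennreal c * ((\<integral>\<^sup>+l. ennreal (k l) \<partial>lborel) + ennreal (d * hv) * NN)"
  proof (intro mult_left_mono add_mono order_refl)
    have "ennreal \<omega> * (\<integral>\<^sup>+l. ennreal (f l) \<partial>lborel) = (\<integral>\<^sup>+l. ennreal \<omega> * ennreal (f l) \<partial>lborel)"
      by (rule nn_integral_cmult[symmetric]) measurable
    also have "\<dots> \<le> (\<integral>\<^sup>+l. ennreal (k l) \<partial>lborel)"
      by (intro nn_integral_mono) (use w f0 fk in \<open>simp add: ennreal_mult[symmetric] ennreal_leI\<close>)
    finally show "ennreal \<omega> * (\<integral>\<^sup>+l. ennreal (f l) \<partial>lborel) \<le> (\<integral>\<^sup>+l. ennreal (k l) \<partial>lborel)" .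
    show "ennreal (\<omega> * g0) * NN \<le> ennreal (d * hv) * NN" using ennreal_leI[OF gd] by (rule mult_right_mono) simp
  qed simp
  finally show ?thesis .
qed

lemma peetre:
  fixes x y p :: real assumes "0 \<le> p"
  shows "(1 + \<bar>x + y\<bar>) powr p \<le> (1 + \<bar>x\<bar>) powr p * (1 + \<bar>y\<bar>) powr p"
proof -
  have "1 + \<bar>x + y\<bar> \<le> (1 + \<bar>x\<bar>) * (1 + \<bar>y\<bar>)"
  proof -
    have "\<bar>x + y\<bar> \<le> \<bar>x\<bar> + \<bar>y\<bar>" by (rule abs_triangle_ineq)
    moreover have "0 \<le> \<bar>x\<bar> * \<bar>y\<bar>" by simp
    ultimately have "1 + \<bar>x + y\<bar> \<le> 1 + \<bar>x\<bar> + \<bar>y\<bar> + \<bar>x\<bar> * \<bar>y\<bar>" by linarith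
    also have "\<dots> = (1 + \<bar>x\<bar>) * (1 + \<bar>y\<bar>)" by (simp add: algebra_simps)
    finally show ?thesis .
  qed
  then have "(1 + \<bar>x + y\<bar>) powr p \<le> ((1 + \<bar>x\<bar>) * (1 + \<bar>y\<bar>)) powr p"
    using assms by (intro powr_mono2) auto
  also have "\<dots> = (1 + \<bar>x\<bar>) powr p * (1 + \<bar>y\<bar>) powr p" by (rule powr_mult)
  finally show ?thesis .
qed

lemma decay_pow:
  fixes s b :: real assumes "b \<le> 1/2"
  shows "(1 + \<bar>s\<bar>) powr b / (1 + \<bar>s\<bar>) \<le> (1 + \<bar>s\<bar>) powr (- b)"
proof -
  have "(1 + \<bar>s\<bar>) powr b / (1 + \<bar>s\<bar>) = (1 + \<bar>s\<bar>) powr (b - 1)"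
    by (simp add: powr_diff)
  also have "\<dots> \<le> (1 + \<bar>s\<bar>) powr (- b)" using assms by (intro powr_mono) auto
  finally show ?thesis .
qed

lemma powr_sq: fixes x p :: real shows "0 \<le> x \<Longrightarrow> (x powr p)\<^sup>2 = x powr (2*p)"
  unfolding power2_eq_square mult_2 by (rule powr_add[symmetric])

lemma X1_bound:
  fixes W Fc :: "real \<Rightarrow> real" and a b c :: real
  assumes Wm[measurable]: "W \<in> borel_measurable borel" and W0: "\<And>l. W l \<ge> 0"
    and b: "0 < b" "b < 1/2" and c: "c \<ge> 0" and Fc0: "\<And>\<mu>. Fc \<mu> \<ge> 0"
    and hF: "\<And>\<mu>. ennreal (Fc \<mu>) \<le> ennreal c * ((\<integral>\<^sup>+l. ennreal (gg (\<mu> - l) * (W l / (1 + \<bar>l - a\<bar>))) \<partial>lborel)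
        + ennreal (gg (\<mu> - a)) * (\<integral>\<^sup>+l. ennreal (W l / (1 + \<bar>l - a\<bar>)) \<partial>lborel))"
  shows "(\<integral>\<^sup>+\<mu>. ennreal ((1 + \<bar>\<mu> - a\<bar>) powr (2*b) * (Fc \<mu>)\<^sup>2) \<partial>lborel)
    \<le> ennreal (2*c\<^sup>2) * ((\<integral>\<^sup>+x. ennreal (hp b x) \<partial>lborel)\<^sup>2 * (\<integral>\<^sup>+l. ennreal ((W l)\<^sup>2 / (1 + \<bar>l - a\<bar>) powr (2*b)) \<partial>lborel))
      + ennreal (2*c\<^sup>2*1\<^sup>2) * ((\<integral>\<^sup>+x. ennreal ((hp b x)\<^sup>2) \<partial>lborel) * (\<integral>\<^sup>+l. ennreal (W l / (1 + \<bar>l - a\<bar>)) \<partial>lborel)\<^sup>2)"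
proof -
  define NN where "NN = (\<integral>\<^sup>+l. ennreal (W l / (1 + \<bar>l - a\<bar>)) \<partial>lborel)"
  define \<omega> where "\<omega> \<mu> = (1 + \<bar>\<mu> - a\<bar>) powr b" for \<mu>
  define V where "V l = W l * (1 + \<bar>l - a\<bar>) powr (-b)" for l
  have Vm[measurable]: "V \<in> borel_measurable borel" unfolding V_def by measurable
  have hyp: "ennreal (\<omega> \<mu> * Fc \<mu>) \<le> ennreal c * ((\<integral>\<^sup>+l. ennreal (hp b (\<mu> - l) * V l) \<partial>lborel) + ennreal (1 * hp b (\<mu> - a)) * NN)" for \<mu>
  proof (rule hyp_helper[OF hF[of \<mu>, folded NN_def]])
    show "0 \<le> \<omega> \<mu>" "0 \<le> c" "0 \<le> gg (\<mu> - a)" using c gg_pos[of "\<mu> - a"] by (auto simp: \<omega>_def)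
    show "0 \<le> gg (\<mu> - l) * (W l / (1 + \<bar>l - a\<bar>))" for l using gg_pos[of "\<mu> - l"] W0[of l] by simp
    show "(\<lambda>l. gg (\<mu> - l) * (W l / (1 + \<bar>l - a\<bar>))) \<in> borel_measurable borel" by measurable
    show "\<omega> \<mu> * gg (\<mu> - a) \<le> 1 * hp b (\<mu> - a)" by (simp add: \<omega>_def hp_def)
    fix l
    have pe: "\<omega> \<mu> \<le> (1 + \<bar>\<mu> - l\<bar>) powr b * (1 + \<bar>l - a\<bar>) powr b"
      unfolding \<omega>_def using peetre[of b "\<mu> - l" "l - a"] b by simp
    have "\<omega> \<mu> * (gg (\<mu> - l) * (W l / (1 + \<bar>l - a\<bar>)))
        \<le> ((1 + \<bar>\<mu> - l\<bar>) powr b * (1 + \<bar>l - a\<bar>) powr b) * (gg (\<mu> - l) * (W l / (1 + \<bar>l - a\<bar>)))"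
      by (rule mult_right_mono[OF pe]) (use gg_pos[of "\<mu> - l"] W0[of l] in simp)
    also have "\<dots> = hp b (\<mu> - l) * W l * ((1 + \<bar>l - a\<bar>) powr b / (1 + \<bar>l - a\<bar>))"
      by (simp add: hp_def)
    also have "\<dots> \<le> hp b (\<mu> - l) * W l * (1 + \<bar>l - a\<bar>) powr (-b)"
      by (intro mult_left_mono decay_pow) (use b hp_nonneg W0 in auto)
    also have "\<dots> = hp b (\<mu> - l) * V l" by (simp add: V_def)
    finally show "\<omega> \<mu> * (gg (\<mu> - l) * (W l / (1 + \<bar>l - a\<bar>))) \<le> hp b (\<mu> - l) * V l" .
  qed
  have main: "(\<integral>\<^sup>+\<mu>. ennreal ((\<omega> \<mu> * Fc \<mu>)\<^sup>2) \<partial>lborel)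
    \<le> ennreal (2*c\<^sup>2) * ((\<integral>\<^sup>+x. ennreal (hp b x) \<partial>lborel)\<^sup>2 * (\<integral>\<^sup>+l. ennreal ((V l)\<^sup>2) \<partial>lborel))
      + ennreal (2*c\<^sup>2*1\<^sup>2) * ((\<integral>\<^sup>+x. ennreal ((hp b x)\<^sup>2) \<partial>lborel) * NN\<^sup>2)"
    by (rule abs_bound[OF hp_meas Vm hp_nonneg _ c _ _ hyp]) (use W0 Fc0 in \<open>auto simp: V_def \<omega>_def\<close>)
  have e1: "(\<omega> \<mu> * Fc \<mu>)\<^sup>2 = (1 + \<bar>\<mu> - a\<bar>) powr (2*b) * (Fc \<mu>)\<^sup>2" for \<mu>
    unfolding \<omega>_def power_mult_distrib by (subst powr_sq) auto
  have e2: "(V l)\<^sup>2 = (W l)\<^sup>2 / (1 + \<bar>l - a\<bar>) powr (2*b)" for l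
    unfolding V_def power_mult_distrib by (subst powr_sq) (auto simp: powr_minus_divide)
  show ?thesis using main unfolding e1 e2 NN_def .
qed

lemma X2_bound:
  fixes W Fc :: "real \<Rightarrow> real" and a \<alpha> c :: real
  assumes Wm[measurable]: "W \<in> borel_measurable borel" and W0: "\<And>l. W l \<ge> 0"
    and al: "0 < \<alpha>" "\<alpha> < 1" and a: "\<bar>a\<bar> < 1" and c: "c \<ge> 0" and Fc0: "\<And>\<mu>. Fc \<mu> \<ge> 0"
    and hF: "\<And>\<mu>. ennreal (Fc \<mu>) \<le> ennreal c * ((\<integral>\<^sup>+l. ennreal (gg (\<mu> - l) * (W l / (1 + \<bar>l - a\<bar>))) \<partial>lborel)
        + ennreal (gg (\<mu> - a)) * (\<integral>\<^sup>+l. ennreal (W l / (1 + \<bar>l - a\<bar>)) \<partial>lborel))"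
  shows "(\<integral>\<^sup>+\<mu>. ennreal ((1 + \<bar>\<mu>\<bar>) powr (2*\<alpha>) * (Fc \<mu>)\<^sup>2) \<partial>lborel)
    \<le> ennreal (2*c\<^sup>2) * ((\<integral>\<^sup>+x. ennreal (hp \<alpha> x) \<partial>lborel)\<^sup>2 * (4 * (\<integral>\<^sup>+l. ennreal ((W l)\<^sup>2 / (1 + \<bar>l\<bar>) powr (2*(1-\<alpha>))) \<partial>lborel)))
      + ennreal (2*c\<^sup>2*2\<^sup>2) * ((\<integral>\<^sup>+x. ennreal ((hp \<alpha> x)\<^sup>2) \<partial>lborel) * (\<integral>\<^sup>+l. ennreal (W l / (1 + \<bar>l - a\<bar>)) \<partial>lborel)\<^sup>2)"
proof -
  define NN where "NN = (\<integral>\<^sup>+l. ennreal (W l / (1 + \<bar>l - a\<bar>)) \<partial>lborel)"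
  define \<omega> where "\<omega> \<mu> = (1 + \<bar>\<mu>\<bar>) powr \<alpha>" for \<mu>
  define V where "V l = 2 * W l * (1 + \<bar>l\<bar>) powr (\<alpha> - 1)" for l
  have Vm[measurable]: "V \<in> borel_measurable borel" unfolding V_def by measurable
  have hyp: "ennreal (\<omega> \<mu> * Fc \<mu>) \<le> ennreal c * ((\<integral>\<^sup>+l. ennreal (hp \<alpha> (\<mu> - l) * V l) \<partial>lborel) + ennreal (2 * hp \<alpha> (\<mu> - a)) * NN)" for \<mu>
  proof (rule hyp_helper[OF hF[of \<mu>, folded NN_def]])
    show "0 \<le> \<omega> \<mu>" "0 \<le> c" "0 \<le> gg (\<mu> - a)" using c gg_pos[of "\<mu> - a"] by (auto simp: \<omega>_def)
    show "0 \<le> gg (\<mu> - l) * (W l / (1 + \<bar>l - a\<bar>))" for l using gg_pos[of "\<mu> - l"] W0[of l] by simp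
    show "(\<lambda>l. gg (\<mu> - l) * (W l / (1 + \<bar>l - a\<bar>))) \<in> borel_measurable borel" by measurable
    show "\<omega> \<mu> * gg (\<mu> - a) \<le> 2 * hp \<alpha> (\<mu> - a)"
    proof -
      have pe: "\<omega> \<mu> \<le> (1 + \<bar>\<mu> - a\<bar>) powr \<alpha> * (1 + \<bar>a\<bar>) powr \<alpha>"
        unfolding \<omega>_def using peetre[of \<alpha> "\<mu> - a" a] al by simp
      have "(1 + \<bar>a\<bar>) powr \<alpha> \<le> 2 powr \<alpha>" using a al by (intro powr_mono2) auto
      also have "\<dots> \<le> 2 powr 1" using al by (intro powr_mono) auto
      finally have "(1 + \<bar>a\<bar>) powr \<alpha> \<le> 2" by simp
      then have "\<omega> \<mu> \<le> (1 + \<bar>\<mu> - a\<bar>) powr \<alpha> * 2"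
        using pe by (meson mult_left_mono order_trans powr_ge_zero)
      then have "\<omega> \<mu> * gg (\<mu> - a) \<le> ((1 + \<bar>\<mu> - a\<bar>) powr \<alpha> * 2) * gg (\<mu> - a)"
        by (rule mult_right_mono) (use gg_pos[of "\<mu> - a"] in simp)
      then show ?thesis by (simp add: hp_def)
    qed
    fix l
    have pe: "\<omega> \<mu> \<le> (1 + \<bar>\<mu> - l\<bar>) powr \<alpha> * (1 + \<bar>l\<bar>) powr \<alpha>"
      unfolding \<omega>_def using peetre[of \<alpha> "\<mu> - l" l] al by simp
    have q: "1 / (1 + \<bar>l - a\<bar>) \<le> 2 / (1 + \<bar>l\<bar>)"
    proof -
      have "\<bar>l\<bar> \<le> \<bar>l - a\<bar> + \<bar>a\<bar>" by (metis abs_triangle_ineq diff_add_cancel)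
      moreover have "0 \<le> \<bar>l - a\<bar>" by simp
      moreover have "\<And>x y z::real. x \<le> y + z \<Longrightarrow> 0 \<le> y \<Longrightarrow> z < 1 \<Longrightarrow> 1 + x \<le> 2 + 2 * y" by linarith
      ultimately have "1 + \<bar>l\<bar> \<le> 2 + 2 * \<bar>l - a\<bar>" using a by blast
      then have "1 + \<bar>l\<bar> \<le> 2 * (1 + \<bar>l - a\<bar>)" by (simp add: algebra_simps)
      then have "2 / (2 * (1 + \<bar>l - a\<bar>)) \<le> 2 / (1 + \<bar>l\<bar>)"
        by (rule divide_left_mono) (auto intro!: mult_pos_pos add_pos_nonneg)
      moreover have "2 / (2 * (1 + \<bar>l - a\<bar>)) = 1 / (1 + \<bar>l - a\<bar>)"
        using mult_divide_mult_cancel_left[of "2::real" 1 "1 + \<bar>l - a\<bar>"] by simp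
      ultimately show ?thesis by simp
    qed
    have "\<omega> \<mu> * (gg (\<mu> - l) * (W l / (1 + \<bar>l - a\<bar>)))
        \<le> ((1 + \<bar>\<mu> - l\<bar>) powr \<alpha> * (1 + \<bar>l\<bar>) powr \<alpha>) * (gg (\<mu> - l) * (W l / (1 + \<bar>l - a\<bar>)))"
      by (rule mult_right_mono[OF pe]) (use gg_pos[of "\<mu> - l"] W0[of l] in simp)
    also have "\<dots> = hp \<alpha> (\<mu> - l) * W l * (1 + \<bar>l\<bar>) powr \<alpha> * (1 / (1 + \<bar>l - a\<bar>))"
      by (simp add: hp_def)
    also have "\<dots> \<le> hp \<alpha> (\<mu> - l) * W l * (1 + \<bar>l\<bar>) powr \<alpha> * (2 / (1 + \<bar>l\<bar>))"
      by (intro mult_left_mono q) (use hp_nonneg W0 in auto)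
    also have "\<dots> = hp \<alpha> (\<mu> - l) * V l"
    proof -
      have "(1 + \<bar>l\<bar>) powr (\<alpha> - 1) = (1 + \<bar>l\<bar>) powr \<alpha> / (1 + \<bar>l\<bar>)" by (simp add: powr_diff)
      then show ?thesis by (simp add: V_def)
    qed
    finally show "\<omega> \<mu> * (gg (\<mu> - l) * (W l / (1 + \<bar>l - a\<bar>))) \<le> hp \<alpha> (\<mu> - l) * V l" .
  qed
  have main: "(\<integral>\<^sup>+\<mu>. ennreal ((\<omega> \<mu> * Fc \<mu>)\<^sup>2) \<partial>lborel)
    \<le> ennreal (2*c\<^sup>2) * ((\<integral>\<^sup>+x. ennreal (hp \<alpha> x) \<partial>lborel)\<^sup>2 * (\<integral>\<^sup>+l. ennreal ((V l)\<^sup>2) \<partial>lborel))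
      + ennreal (2*c\<^sup>2*2\<^sup>2) * ((\<integral>\<^sup>+x. ennreal ((hp \<alpha> x)\<^sup>2) \<partial>lborel) * NN\<^sup>2)"
    by (rule abs_bound[OF hp_meas Vm hp_nonneg _ c _ _ hyp]) (use W0 Fc0 in \<open>auto simp: V_def \<omega>_def\<close>)
  have e1: "(\<omega> \<mu> * Fc \<mu>)\<^sup>2 = (1 + \<bar>\<mu>\<bar>) powr (2*\<alpha>) * (Fc \<mu>)\<^sup>2" for \<mu>
    unfolding \<omega>_def power_mult_distrib by (subst powr_sq) auto
  have e2: "(\<integral>\<^sup>+l. ennreal ((V l)\<^sup>2) \<partial>lborel) = 4 * (\<integral>\<^sup>+l. ennreal ((W l)\<^sup>2 / (1 + \<bar>l\<bar>) powr (2*(1-\<alpha>))) \<partial>lborel)"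
  proof -
    have vl: "(V l)\<^sup>2 = 4 * ((W l)\<^sup>2 / (1 + \<bar>l\<bar>) powr (2*(1-\<alpha>)))" for l
    proof -
      have "((1 + \<bar>l\<bar>) powr (\<alpha> - 1))\<^sup>2 = (1 + \<bar>l\<bar>) powr (2*(\<alpha> - 1))" by (rule powr_sq) simp
      also have "\<dots> = 1 / (1 + \<bar>l\<bar>) powr (2*(1-\<alpha>))"
        by (simp add: powr_minus_divide[symmetric] algebra_simps)
      finally show ?thesis unfolding V_def power_mult_distrib by simp
    qed
    then have "(\<integral>\<^sup>+l. ennreal ((V l)\<^sup>2) \<partial>lborel) = (\<integral>\<^sup>+l. 4 * ennreal ((W l)\<^sup>2 / (1 + \<bar>l\<bar>) powr (2*(1-\<alpha>))) \<partial>lborel)"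
    proof (intro nn_integral_cong)
      fix l
      have "ennreal ((V l)\<^sup>2) = ennreal 4 * ennreal ((W l)\<^sup>2 / (1 + \<bar>l\<bar>) powr (2*(1-\<alpha>)))"
        unfolding vl by (rule ennreal_mult) auto
      then show "ennreal ((V l)\<^sup>2) = 4 * ennreal ((W l)\<^sup>2 / (1 + \<bar>l\<bar>) powr (2*(1-\<alpha>)))" by simp
    qed
    also have "\<dots> = 4 * (\<integral>\<^sup>+l. ennreal ((W l)\<^sup>2 / (1 + \<bar>l\<bar>) powr (2*(1-\<alpha>))) \<partial>lborel)"
      by (rule nn_integral_cmult) measurable
    finally show ?thesis .
  qed
  show ?thesis using main unfolding e1 e2 NN_def .
qed

lemma enn_sqrt_fin: "x < \<infinity> \<Longrightarrow> enn_sqrt x = ennreal (sqrt (enn2real x))"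
  unfolding enn_sqrt_def by auto

lemma enn_sqrt_inf: "enn_sqrt x < \<infinity> \<Longrightarrow> x < \<infinity>"
  unfolding enn_sqrt_def by (cases "x = \<infinity>") (auto simp: top_unique less_top[symmetric])

lemma final_arith:
  fixes J1 J2 I1 I2 I3 :: ennreal and A1 B1 A2 B2 :: real
  assumes J1: "J1 \<le> ennreal A1 * I1 + ennreal B1 * I3" and J2: "J2 \<le> ennreal A2 * I2 + ennreal B2 * I3"
    and f1: "I1 < \<infinity>" and f2: "I2 < \<infinity>" and f3: "I3 < \<infinity>"
    and pos: "A1 \<ge> 0" "B1 \<ge> 0" "A2 \<ge> 0" "B2 \<ge> 0"
  shows "enn_sqrt J1 + enn_sqrt J2 \<le> ennreal (2 * sqrt (A1 + B1 + A2 + B2)) * (enn_sqrt I1 + enn_sqrt I2 + enn_sqrt I3)"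
proof -
  define M where "M = A1 + B1 + A2 + B2"
  have M: "M \<ge> 0" using pos by (simp add: M_def)
  obtain i1 where i1: "I1 = ennreal i1" "i1 \<ge> 0" using f1 by (cases I1) auto
  obtain i2 where i2: "I2 = ennreal i2" "i2 \<ge> 0" using f2 by (cases I2) auto
  obtain i3 where i3: "I3 = ennreal i3" "i3 \<ge> 0" using f3 by (cases I3) auto
  have "J1 \<le> ennreal A1 * ennreal i1 + ennreal B1 * ennreal i3" using J1 i1 i3 by simp
  also have "\<dots> = ennreal (A1 * i1 + B1 * i3)"
    using i1 i3 pos by (simp add: ennreal_mult ennreal_plus)
  finally have hJ: "J1 \<le> ennreal (A1 * i1 + B1 * i3)" .
  define X where "X = A1 * i1 + B1 * i3"
  have X: "X \<ge> 0" using pos i1 i3 by (simp add: X_def)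
  have hJ': "J1 \<le> ennreal X" using hJ by (simp add: X_def)
  obtain j1 where j1: "J1 = ennreal j1" "j1 \<ge> 0" "j1 \<le> A1 * i1 + B1 * i3"
  proof (cases J1)
    case (real r)
    then have "r \<le> X" using hJ' X by (simp add: ennreal_le_iff)
    then show ?thesis using that[of r] real by (simp add: X_def)
  next
    case top then show ?thesis using hJ' by (simp add: top_unique)
  qed
  have "J2 \<le> ennreal A2 * ennreal i2 + ennreal B2 * ennreal i3" using J2 i2 i3 by simp
  also have "\<dots> = ennreal (A2 * i2 + B2 * i3)"
    using i2 i3 pos by (simp add: ennreal_mult ennreal_plus)
  finally have hJ: "J2 \<le> ennreal (A2 * i2 + B2 * i3)" .
  define X where "X = A2 * i2 + B2 * i3"
  have X: "X \<ge> 0" using pos i2 i3 by (simp add: X_def)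
  have hJ': "J2 \<le> ennreal X" using hJ by (simp add: X_def)
  obtain j2 where j2: "J2 = ennreal j2" "j2 \<ge> 0" "j2 \<le> A2 * i2 + B2 * i3"
  proof (cases J2)
    case (real r)
    then have "r \<le> X" using hJ' X by (simp add: ennreal_le_iff)
    then show ?thesis using that[of r] real by (simp add: X_def)
  next
    case top then show ?thesis using hJ' by (simp add: top_unique)
  qed
  have s1: "sqrt j1 \<le> sqrt M * (sqrt i1 + sqrt i3)"
  proof -
    have "j1 \<le> M * (i1 + i3)"
    proof -
      have "M * (i1 + i3) = A1 * i1 + B1 * i3 + (A1 * i3 + A2 * i1 + A2 * i3 + B1 * i1 + B2 * i1 + B2 * i3)"
        by (simp add: M_def algebra_simps)
      moreover have "0 \<le> A1 * i3 + A2 * i1 + A2 * i3 + B1 * i1 + B2 * i1 + B2 * i3"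
        using pos i1 i3 by (intro add_nonneg_nonneg mult_nonneg_nonneg) auto
      ultimately show ?thesis using j1(3) by linarith
    qed
    then have "sqrt j1 \<le> sqrt (M * (i1 + i3))" by simp
    also have "\<dots> = sqrt M * sqrt (i1 + i3)" by (simp add: real_sqrt_mult)
    also have "\<dots> \<le> sqrt M * (sqrt i1 + sqrt i3)"
      by (intro mult_left_mono sqrt_add_le_add_sqrt) (use i1 i3 M in auto)
    finally show ?thesis .
  qed
  have s2: "sqrt j2 \<le> sqrt M * (sqrt i2 + sqrt i3)"
  proof -
    have "j2 \<le> M * (i2 + i3)"
    proof -
      have "M * (i2 + i3) = A2 * i2 + B2 * i3 + (A2 * i3 + A1 * i2 + A1 * i3 + B2 * i2 + B1 * i2 + B1 * i3)"
        by (simp add: M_def algebra_simps)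
      moreover have "0 \<le> A2 * i3 + A1 * i2 + A1 * i3 + B2 * i2 + B1 * i2 + B1 * i3"
        using pos i2 i3 by (intro add_nonneg_nonneg mult_nonneg_nonneg) auto
      ultimately show ?thesis using j2(3) by linarith
    qed
    then have "sqrt j2 \<le> sqrt (M * (i2 + i3))" by simp
    also have "\<dots> = sqrt M * sqrt (i2 + i3)" by (simp add: real_sqrt_mult)
    also have "\<dots> \<le> sqrt M * (sqrt i2 + sqrt i3)"
      by (intro mult_left_mono sqrt_add_le_add_sqrt) (use i2 i3 M in auto)
    finally show ?thesis .
  qed
  have "sqrt j1 + sqrt j2 \<le> 2 * sqrt M * (sqrt i1 + sqrt i2 + sqrt i3)"
  proof -
    have "sqrt j1 + sqrt j2 \<le> sqrt M * (sqrt i1 + sqrt i3) + sqrt M * (sqrt i2 + sqrt i3)" using s1 s2 by simp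
    also have "\<dots> \<le> 2 * sqrt M * (sqrt i1 + sqrt i2 + sqrt i3)"
      using M i1 i2 i3 by (simp add: algebra_simps)
    finally show ?thesis .
  qed
  then have "ennreal (sqrt j1 + sqrt j2) \<le> ennreal (2 * sqrt M * (sqrt i1 + sqrt i2 + sqrt i3))"
    by (rule ennreal_leI)
  then show ?thesis
    using i1 i2 i3 j1 j2 M
    by (simp add: enn_sqrt_def M_def ennreal_mult ennreal_plus[symmetric] del: ennreal_plus)
qed

lemma enn_alg1: "x \<ge> 0 \<Longrightarrow> y \<ge> 0 \<Longrightarrow> ennreal x * ((ennreal y)\<^sup>2 * Z) = ennreal (x * y\<^sup>2) * Z"
  by (simp add: ennreal_mult ennreal_power mult.assoc)

lemma enn_alg2: "x \<ge> 0 \<Longrightarrow> y \<ge> 0 \<Longrightarrow> ennreal x * (ennreal y * Z) = ennreal (x * y) * Z"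
  by (simp add: ennreal_mult mult.assoc)

lemma enn_alg3: "x \<ge> 0 \<Longrightarrow> y \<ge> 0 \<Longrightarrow> ennreal x * ((ennreal y)\<^sup>2 * (4 * Z)) = ennreal (x * y\<^sup>2 * 4) * Z"
  by (simp add: ennreal_mult ennreal_power mult.assoc mult.left_commute)

theorem lemma5p4:
  fixes \<alpha> b :: real and \<theta> :: "real \<Rightarrow> real"
  assumes "1/2 < \<alpha>" "\<alpha> < 2/3" "0 < b" "b < 1/2"
    and "C0_infty \<theta>"
  shows "\<exists>C::real. C \<ge> 0 \<and>
    (\<forall>wh :: real \<Rightarrow> real \<Rightarrow> complex.
       case_prod wh \<in> borel_measurable borel \<longrightarrow> Yb_norm \<alpha> b wh < \<infinity> \<longrightarrow>
       Xb_norm \<alpha> b (cutoff_duhamel_hat \<theta> wh) \<le> ennreal C * Yb_norm \<alpha> b wh)"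
proof -
  obtain K where K: "K \<ge> 0" and Kb: "\<And>\<mu> lam a. norm (LINT t|lborel. exp (- \<i> * complex_of_real (t*\<mu>)) * complex_of_real (\<theta> t) *
     ((exp (\<i> * complex_of_real (t*lam)) - exp (\<i> * complex_of_real (t*a))) / (\<i> * complex_of_real (lam - a))))
     \<le> K * (gg (\<mu> - lam) + gg (\<mu> - a)) / (1 + \<bar>lam - a\<bar>)"
    using kernel_bound[OF assms(5)] by blast
  define c where "c = K / (2*pi)"
  have c: "c \<ge> 0" using K by (simp add: c_def)
  have b1: "b < 1" and a1: "\<alpha> < 1" and a0: "0 < \<alpha>" using assms by auto
  define hb where "hb = enn2real (\<integral>\<^sup>+x. ennreal (hp b x) \<partial>lborel)"
  define g1 where "g1 = enn2real (\<integral>\<^sup>+x. ennreal ((hp b x)\<^sup>2) \<partial>lborel)"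
  define ha where "ha = enn2real (\<integral>\<^sup>+x. ennreal (hp \<alpha> x) \<partial>lborel)"
  define g2 where "g2 = enn2real (\<integral>\<^sup>+x. ennreal ((hp \<alpha> x)\<^sup>2) \<partial>lborel)"
  have Ehb: "(\<integral>\<^sup>+x. ennreal (hp b x) \<partial>lborel) = ennreal hb" unfolding hb_def using hp_fin[OF b1] by simp
  have Eg1: "(\<integral>\<^sup>+x. ennreal ((hp b x)\<^sup>2) \<partial>lborel) = ennreal g1" unfolding g1_def using hp2_fin[OF b1] by simp
  have Eha: "(\<integral>\<^sup>+x. ennreal (hp \<alpha> x) \<partial>lborel) = ennreal ha" unfolding ha_def using hp_fin[OF a1] by simp
  have Eg2: "(\<integral>\<^sup>+x. ennreal ((hp \<alpha> x)\<^sup>2) \<partial>lborel) = ennreal g2" unfolding g2_def using hp2_fin[OF a1] by simp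
  have pos: "hb \<ge> 0" "g1 \<ge> 0" "ha \<ge> 0" "g2 \<ge> 0" by (auto simp: hb_def g1_def ha_def g2_def)
  define A1 where "A1 = 2*c\<^sup>2 * hb\<^sup>2"
  define B1 where "B1 = 2*c\<^sup>2*1\<^sup>2 * g1"
  define A2 where "A2 = 2*c\<^sup>2 * ha\<^sup>2 * 4"
  define B2 where "B2 = 2*c\<^sup>2*2\<^sup>2 * g2"
  have posA: "A1 \<ge> 0" "B1 \<ge> 0" "A2 \<ge> 0" "B2 \<ge> 0" using pos by (auto simp: A1_def B1_def A2_def B2_def)
  show ?thesis
  proof (intro exI[of _ "2 * sqrt (A1 + B1 + A2 + B2)"] conjI allI impI)
    show "0 \<le> 2 * sqrt (A1 + B1 + A2 + B2)" using posA by simp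
    fix wh :: "real \<Rightarrow> real \<Rightarrow> complex"
    assume wm: "case_prod wh \<in> borel_measurable borel" and Yfin: "Yb_norm \<alpha> b wh < \<infinity>"
    have hw[measurable]: "case_prod wh \<in> borel_measurable (lborel \<Otimes>\<^sub>M lborel)"
      unfolding lborel_prod using wm by simp
    have wx[measurable]: "wh \<xi> \<in> borel_measurable borel" for \<xi>
      using measurable_Pair2[OF hw, of \<xi>] by simp
    define N where "N \<xi> = (\<integral>\<^sup>+lam. ennreal (cmod (wh \<xi> lam) / (1 + \<bar>lam - \<xi>^3\<bar>)) \<partial>lborel)" for \<xi>
    have Nm[measurable]: "N \<in> borel_measurable lborel" unfolding N_def by measurable
    define I1 where "I1 = (\<integral>\<^sup>+ \<xi>. \<integral>\<^sup>+ lam. ennreal ((cmod (wh \<xi> lam))\<^sup>2 / (1 + \<bar>lam - \<xi>^3\<bar>) powr (2*b)) \<partial>lborel \<partial>lborel)"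
    define I2 where "I2 = (\<integral>\<^sup>+ \<xi>. indicator {-1<..<1} \<xi> *
        (\<integral>\<^sup>+ lam. ennreal ((cmod (wh \<xi> lam))\<^sup>2 / (1 + \<bar>lam\<bar>) powr (2*(1-\<alpha>))) \<partial>lborel) \<partial>lborel)"
    define I3 where "I3 = (\<integral>\<^sup>+ \<xi>. (N \<xi>)\<^sup>2 \<partial>lborel)"
    have Yeq: "Yb_norm \<alpha> b wh = enn_sqrt I1 + enn_sqrt I2 + enn_sqrt I3"
      unfolding Yb_norm_def I1_def I2_def I3_def N_def ..
    have f1: "I1 < \<infinity>" and f2: "I2 < \<infinity>" and f3: "I3 < \<infinity>"
      using Yfin enn_sqrt_inf[of I1] enn_sqrt_inf[of I2] enn_sqrt_inf[of I3] unfolding Yeq by auto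
    have AEN: "AE \<xi> in lborel. N \<xi> < \<infinity>"
    proof -
      have "AE \<xi> in lborel. (N \<xi>)\<^sup>2 \<noteq> \<infinity>"
        by (rule nn_integral_PInf_AE) (use f3 in \<open>auto simp: I3_def\<close>)
      then show ?thesis by eventually_elim (auto simp: top.not_eq_extremum[symmetric] power_eq_top_ennreal)
    qed
    have hF: "ennreal (cmod (cutoff_duhamel_hat \<theta> wh \<xi> \<mu>)) \<le> ennreal c *
       ((\<integral>\<^sup>+lam. ennreal (gg (\<mu> - lam) * (cmod (wh \<xi> lam) / (1 + \<bar>lam - \<xi>^3\<bar>))) \<partial>lborel)
        + ennreal (gg (\<mu> - \<xi>^3)) * (\<integral>\<^sup>+lam. ennreal (cmod (wh \<xi> lam) / (1 + \<bar>lam - \<xi>^3\<bar>)) \<partial>lborel))"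
      if "N \<xi> < \<infinity>" for \<xi> \<mu>
      unfolding c_def by (rule pointwise[OF assms(5) K Kb wx]) (use that in \<open>simp add: N_def\<close>)
    define J1 where "J1 = (\<integral>\<^sup>+ \<xi>. \<integral>\<^sup>+ lam. ennreal ((1 + \<bar>lam - \<xi>^3\<bar>) powr (2*b) * (cmod (cutoff_duhamel_hat \<theta> wh \<xi> lam))\<^sup>2) \<partial>lborel \<partial>lborel)"
    define J2 where "J2 = (\<integral>\<^sup>+ \<xi>. indicator {-1<..<1} \<xi> *
        (\<integral>\<^sup>+ lam. ennreal ((1 + \<bar>lam\<bar>) powr (2*\<alpha>) * (cmod (cutoff_duhamel_hat \<theta> wh \<xi> lam))\<^sup>2) \<partial>lborel) \<partial>lborel)"
    have Xeq: "Xb_norm \<alpha> b (cutoff_duhamel_hat \<theta> wh) = enn_sqrt J1 + enn_sqrt J2"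
      unfolding Xb_norm_def J1_def J2_def ..
    have mY1[measurable]: "(\<lambda>\<xi>. \<integral>\<^sup>+ lam. ennreal ((cmod (wh \<xi> lam))\<^sup>2 / (1 + \<bar>lam - \<xi>^3\<bar>) powr (2*b)) \<partial>lborel) \<in> borel_measurable lborel"
      by measurable
    have mY2[measurable]: "(\<lambda>\<xi>. indicator {-1<..<1} \<xi> * (\<integral>\<^sup>+ lam. ennreal ((cmod (wh \<xi> lam))\<^sup>2 / (1 + \<bar>lam\<bar>) powr (2*(1-\<alpha>))) \<partial>lborel)) \<in> borel_measurable lborel"
      by measurable
    have mN2[measurable]: "(\<lambda>\<xi>. (N \<xi>)\<^sup>2) \<in> borel_measurable lborel" by measurable
    have J1b: "J1 \<le> ennreal A1 * I1 + ennreal B1 * I3"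
    proof -
      have "J1 \<le> (\<integral>\<^sup>+ \<xi>. ennreal A1 * (\<integral>\<^sup>+ lam. ennreal ((cmod (wh \<xi> lam))\<^sup>2 / (1 + \<bar>lam - \<xi>^3\<bar>) powr (2*b)) \<partial>lborel) + ennreal B1 * (N \<xi>)\<^sup>2 \<partial>lborel)"
        unfolding J1_def
      proof (rule nn_integral_mono_AE)
        show "AE \<xi> in lborel. (\<integral>\<^sup>+ lam. ennreal ((1 + \<bar>lam - \<xi>^3\<bar>) powr (2*b) * (cmod (cutoff_duhamel_hat \<theta> wh \<xi> lam))\<^sup>2) \<partial>lborel)
           \<le> ennreal A1 * (\<integral>\<^sup>+ lam. ennreal ((cmod (wh \<xi> lam))\<^sup>2 / (1 + \<bar>lam - \<xi>^3\<bar>) powr (2*b)) \<partial>lborel) + ennreal B1 * (N \<xi>)\<^sup>2"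
          using AEN
        proof eventually_elim
          case (elim \<xi>)
          have "(\<integral>\<^sup>+ lam. ennreal ((1 + \<bar>lam - \<xi>^3\<bar>) powr (2*b) * (cmod (cutoff_duhamel_hat \<theta> wh \<xi> lam))\<^sup>2) \<partial>lborel)
            \<le> ennreal (2*c\<^sup>2) * ((\<integral>\<^sup>+x. ennreal (hp b x) \<partial>lborel)\<^sup>2 * (\<integral>\<^sup>+l. ennreal ((cmod (wh \<xi> l))\<^sup>2 / (1 + \<bar>l - \<xi>^3\<bar>) powr (2*b)) \<partial>lborel))
             + ennreal (2*c\<^sup>2*1\<^sup>2) * ((\<integral>\<^sup>+x. ennreal ((hp b x)\<^sup>2) \<partial>lborel) * (\<integral>\<^sup>+l. ennreal (cmod (wh \<xi> l) / (1 + \<bar>l - \<xi>^3\<bar>)) \<partial>lborel)\<^sup>2)"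
            by (rule X1_bound[where W="\<lambda>l. cmod (wh \<xi> l)" and Fc="\<lambda>\<mu>. cmod (cutoff_duhamel_hat \<theta> wh \<xi> \<mu>)"])
               (use assms c hF[OF elim] in auto)
          also have "\<dots> = ennreal A1 * (\<integral>\<^sup>+ lam. ennreal ((cmod (wh \<xi> lam))\<^sup>2 / (1 + \<bar>lam - \<xi>^3\<bar>) powr (2*b)) \<partial>lborel) + ennreal B1 * (N \<xi>)\<^sup>2"
            unfolding Ehb Eg1 A1_def B1_def N_def using c pos by (simp add: enn_alg1 enn_alg2)
          finally show ?case .
        qed
      qed
      also have "\<dots> = ennreal A1 * I1 + ennreal B1 * I3"
        unfolding I1_def I3_def
        by (subst nn_integral_add) (auto simp: nn_integral_cmult)
      finally show ?thesis .
    qed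
    have J2b: "J2 \<le> ennreal A2 * I2 + ennreal B2 * I3"
    proof -
      have "J2 \<le> (\<integral>\<^sup>+ \<xi>. ennreal A2 * (indicator {-1<..<1} \<xi> * (\<integral>\<^sup>+ lam. ennreal ((cmod (wh \<xi> lam))\<^sup>2 / (1 + \<bar>lam\<bar>) powr (2*(1-\<alpha>))) \<partial>lborel)) + ennreal B2 * (N \<xi>)\<^sup>2 \<partial>lborel)"
        unfolding J2_def
      proof (rule nn_integral_mono_AE)
        show "AE \<xi> in lborel. indicator {-1<..<1} \<xi> * (\<integral>\<^sup>+ lam. ennreal ((1 + \<bar>lam\<bar>) powr (2*\<alpha>) * (cmod (cutoff_duhamel_hat \<theta> wh \<xi> lam))\<^sup>2) \<partial>lborel)
           \<le> ennreal A2 * (indicator {-1<..<1} \<xi> * (\<integral>\<^sup>+ lam. ennreal ((cmod (wh \<xi> lam))\<^sup>2 / (1 + \<bar>lam\<bar>) powr (2*(1-\<alpha>))) \<partial>lborel)) + ennreal B2 * (N \<xi>)\<^sup>2"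
          using AEN
        proof eventually_elim
          case (elim \<xi>)
          show ?case
          proof (cases "\<xi> \<in> {-1<..<1}")
            case False then show ?thesis by simp
          next
            case True
            have "\<bar>\<xi>\<bar> < 1" using True by auto
            then have "\<bar>\<xi>\<bar> ^ 3 < 1 ^ 3" by (intro power_strict_mono) auto
            then have a3: "\<bar>\<xi>^3\<bar> < 1" by (simp add: power_abs)
            have "(\<integral>\<^sup>+ lam. ennreal ((1 + \<bar>lam\<bar>) powr (2*\<alpha>) * (cmod (cutoff_duhamel_hat \<theta> wh \<xi> lam))\<^sup>2) \<partial>lborel)
              \<le> ennreal (2*c\<^sup>2) * ((\<integral>\<^sup>+x. ennreal (hp \<alpha> x) \<partial>lborel)\<^sup>2 * (4 * (\<integral>\<^sup>+l. ennreal ((cmod (wh \<xi> l))\<^sup>2 / (1 + \<bar>l\<bar>) powr (2*(1-\<alpha>))) \<partial>lborel)))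
               + ennreal (2*c\<^sup>2*2\<^sup>2) * ((\<integral>\<^sup>+x. ennreal ((hp \<alpha> x)\<^sup>2) \<partial>lborel) * (\<integral>\<^sup>+l. ennreal (cmod (wh \<xi> l) / (1 + \<bar>l - \<xi>^3\<bar>)) \<partial>lborel)\<^sup>2)"
              by (rule X2_bound[where W="\<lambda>l. cmod (wh \<xi> l)" and Fc="\<lambda>\<mu>. cmod (cutoff_duhamel_hat \<theta> wh \<xi> \<mu>)"])
                 (use a0 a1 a3 c hF[OF elim] in auto)
            also have "\<dots> = ennreal A2 * (\<integral>\<^sup>+ lam. ennreal ((cmod (wh \<xi> lam))\<^sup>2 / (1 + \<bar>lam\<bar>) powr (2*(1-\<alpha>))) \<partial>lborel) + ennreal B2 * (N \<xi>)\<^sup>2"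
              unfolding Eha Eg2 A2_def B2_def N_def using c pos by (simp add: enn_alg3 enn_alg2)
            finally show ?thesis using True by simp
          qed
        qed
      qed
      also have "\<dots> = ennreal A2 * I2 + ennreal B2 * I3"
        unfolding I2_def I3_def
        by (subst nn_integral_add) (auto simp: nn_integral_cmult)
      finally show ?thesis .
    qed
    show "Xb_norm \<alpha> b (cutoff_duhamel_hat \<theta> wh) \<le> ennreal (2 * sqrt (A1 + B1 + A2 + B2)) * Yb_norm \<alpha> b wh"
      unfolding Xeq Yeq by (rule final_arith[OF J1b J2b f1 f2 f3 posA])
  qed
qed


end
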